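(* Let $p$ be a prime, $G$ a finitely generated group and $A\le \mathrm{Aut}(G)$ a subgroup. Then: (1) $\theta_1(A)\le\mathrm{Aut}(L_1^p(G))$ is a finite $p$-group if and only if $\theta_n(A)\le\mathrm{Aut}(L_n^p(G))$ is a finite $p$-group for every $n\ge1$; (2) $\theta_1(A)\le\mathrm{Aut}(L_1^p(G))$ is a finite $p$-group if and only if $\sigma_n(A)\le\mathrm{Aut}(G/\gamma_n^p(G))$ is a finite $p$-group for every $n\ge1$.
   Context: The lower $p$-central filtration of $G$ is $\gamma_1^p(G)=G$, $\gamma_{n+1}^p(G)=(\gamma_n^p(G))^p[G,\gamma_n^p(G)]$, where $H^p=\langle h^p: h\in H\rangle$ and $[H,K]=\langle hkh^{-1}k^{-1}: h\in H,k\in K\rangle$. Set $L_n^p(G)=\gamma_n^p(G)/\gamma_{n+1}^p(G)$. Each $\gamma_n^p(G)$ is characteristic in $G$, so there are natural homomorphisms $\theta_n:\mathrm{Aut}(G)\to\mathrm{Aut}(L_n^p(G))$ and $\sigma_n:\mathrm{Aut}(G)\to\mathrm{Aut}(G/\gamma_n^p(G))$ induced by restriction and passage to quotients. *)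

theory Defs
  imports "HOL-Algebra.Algebra"
begin

definition fin_gen :: "('a, 'b) monoid_scheme \<Rightarrow> bool" where
  "fin_gen G \<longleftrightarrow> (\<exists>S. finite S \<and> S \<subseteq> carrier G \<and> generate G S = carrier G)"

definition pow_subgroup :: "('a, 'b) monoid_scheme \<Rightarrow> nat \<Rightarrow> 'a set \<Rightarrow> 'a set" where
  "pow_subgroup G p H = generate G {h [^]\<^bsub>G\<^esub> p | h. h \<in> H}"

definition comm_subgroup :: "('a, 'b) monoid_scheme \<Rightarrow> 'a set \<Rightarrow> 'a set \<Rightarrow> 'a set" where
  "comm_subgroup G H K =
     generate G {h \<otimes>\<^bsub>G\<^esub> k \<otimes>\<^bsub>G\<^esub> inv\<^bsub>G\<^esub> h \<otimes>\<^bsub>G\<^esub> inv\<^bsub>G\<^esub> k | h k. h \<in> H \<and> k \<in> K}"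

(* lpc_aux G p m = gamma_{m+1}^p(G) *)
primrec lpc_aux :: "('a, 'b) monoid_scheme \<Rightarrow> nat \<Rightarrow> nat \<Rightarrow> 'a set" where
  "lpc_aux G p 0 = carrier G"
| "lpc_aux G p (Suc m) =
     pow_subgroup G p (lpc_aux G p m) <#>\<^bsub>G\<^esub> comm_subgroup G (carrier G) (lpc_aux G p m)"

definition gamma :: "('a, 'b) monoid_scheme \<Rightarrow> nat \<Rightarrow> nat \<Rightarrow> 'a set" where
  "gamma G p n = lpc_aux G p (n - 1)"

definition Lquot :: "('a, 'b) monoid_scheme \<Rightarrow> nat \<Rightarrow> nat \<Rightarrow> 'a set monoid" where
  "Lquot G p n = (G\<lparr>carrier := gamma G p n\<rparr>) Mod (gamma G p (Suc n))"

definition theta :: "('a, 'b) monoid_scheme \<Rightarrow> nat \<Rightarrow> nat \<Rightarrow> ('a \<Rightarrow> 'a) \<Rightarrow> ('a set \<Rightarrow> 'a set)" where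
  "theta G p n \<phi> = restrict (\<lambda>C. \<phi> ` C) (carrier (Lquot G p n))"

definition sigma :: "('a, 'b) monoid_scheme \<Rightarrow> nat \<Rightarrow> nat \<Rightarrow> ('a \<Rightarrow> 'a) \<Rightarrow> ('a set \<Rightarrow> 'a set)" where
  "sigma G p n \<phi> = restrict (\<lambda>C. \<phi> ` C) (carrier (G Mod (gamma G p n)))"

definition finite_p_group :: "nat \<Rightarrow> 'c set \<Rightarrow> bool" where
  "finite_p_group p T \<longleftrightarrow> finite T \<and> (\<exists>k. card T = p ^ k)"

end

theory Submission
  imports Defs "HOL-Algebra.Sylow" "HOL-Algebra.Multiplicative_Group"
begin

context group
begin

lemma endo_inv: "\<phi> \<in> hom G G \<Longrightarrow> x \<in> carrier G \<Longrightarrow> \<phi> (inv x) = inv (\<phi> x)"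
  by (simp add: group_hom.hom_inv group_hom_axioms_def group_hom_def is_group)

lemma set_mult_mem: "y \<in> A <#> B \<longleftrightarrow> (\<exists>a\<in>A. \<exists>b\<in>B. y = a \<otimes> b)"
  by (auto simp: set_mult_def)

lemma conj_hom: "g \<in> carrier G \<Longrightarrow> (\<lambda>x. g \<otimes> x \<otimes> inv g) \<in> hom G G"
proof (rule homI)
  fix x y assume "g \<in> carrier G" "x \<in> carrier G" "y \<in> carrier G"
  then show "g \<otimes> (x \<otimes> y) \<otimes> inv g = g \<otimes> x \<otimes> inv g \<otimes> (g \<otimes> y \<otimes> inv g)"
    by (simp add: m_assoc inv_solve_left)
qed auto

lemma endo_generate:
  assumes "\<phi> \<in> hom G G" "S \<subseteq> carrier G" "\<phi> ` S \<subseteq> S"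
  shows "\<phi> ` generate G S \<subseteq> generate G S"
proof
  fix y assume "y \<in> \<phi> ` generate G S"
  then obtain h where h: "h \<in> generate G S" "y = \<phi> h" by auto
  have "\<phi> h \<in> generate G S" using h(1)
  proof (induction rule: generate.induct)
    case one then show ?case using assms(1) hom_one[OF assms(1)] by (simp add: generate.one)
  next
    case (incl h) then show ?case using assms(3) by (auto intro: generate.incl)
  next
    case (inv h)
    have hc: "h \<in> carrier G" using assms(2) inv by blast
    have "\<phi> (inv h) = inv (\<phi> h)" by (rule endo_inv[OF assms(1) hc])
    moreover have "\<phi> h \<in> S" using assms(3) inv by blast
    ultimately show ?case by (simp add: generate.inv)
  next
    case (eng h1 h2)
    have c: "h1 \<in> carrier G" "h2 \<in> carrier G"
      using generate_in_carrier[OF assms(2)] eng by auto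
    have "\<phi> (h1 \<otimes> h2) = \<phi> h1 \<otimes> \<phi> h2" by (rule hom_mult[OF assms(1) c])
    then show ?case using eng by (simp add: generate.eng)
  qed
  then show "y \<in> generate G S" using h by simp
qed

end

locale lpc = group G for G (structure) + fixes p :: nat
begin

abbreviation gm :: "nat \<Rightarrow> 'a set" where "gm k \<equiv> lpc_aux G p k"

definition cm :: "'a \<Rightarrow> 'a \<Rightarrow> 'a" where "cm x y = x \<otimes> y \<otimes> inv x \<otimes> inv y"

lemma cm_closed[simp]: "x \<in> carrier G \<Longrightarrow> y \<in> carrier G \<Longrightarrow> cm x y \<in> carrier G"
  by (simp add: cm_def)

lemma hom_cm: "\<phi> \<in> hom G G \<Longrightarrow> x \<in> carrier G \<Longrightarrow> y \<in> carrier G \<Longrightarrow> \<phi> (cm x y) = cm (\<phi> x) (\<phi> y)"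
  by (simp add: cm_def hom_mult endo_inv hom_in_carrier)

lemma pow_sub_eq: "pow_subgroup G p H = generate G {h [^] p | h. h \<in> H}"
  by (simp add: pow_subgroup_def)

lemma comm_sub_eq: "comm_subgroup G (carrier G) H = generate G {cm h k | h k. h \<in> carrier G \<and> k \<in> H}"
  by (simp add: comm_subgroup_def cm_def)

lemma gm_Suc: "gm (Suc k) = pow_subgroup G p (gm k) <#> comm_subgroup G (carrier G) (gm k)"
  by simp

lemma normal_of_invariant:
  assumes "subgroup H G" "\<And>\<phi>. \<phi> \<in> hom G G \<Longrightarrow> \<phi> ` H \<subseteq> H"
  shows "H \<lhd> G"
proof (rule normal_invI[OF assms(1)])
  fix x h assume "x \<in> carrier G" "h \<in> H"
  then show "x \<otimes> h \<otimes> inv x \<in> H" using assms(2)[OF conj_hom[of x]] by auto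
qed

lemma gm_props: "gm k \<lhd> G \<and> (\<forall>\<phi>\<in>hom G G. \<phi> ` gm k \<subseteq> gm k)"
proof (induction k)
  case 0
  have "carrier G \<lhd> G" by (rule normal_invI[OF subgroup_self]) auto
  moreover have "\<forall>\<phi>\<in>hom G G. \<phi> ` carrier G \<subseteq> carrier G" by (auto intro: hom_in_carrier)
  ultimately show ?case by simp
next
  case (Suc k)
  then have N: "gm k \<lhd> G" and I: "\<And>\<phi>. \<phi>\<in>hom G G \<Longrightarrow> \<phi> ` gm k \<subseteq> gm k" by auto
  have sub: "gm k \<subseteq> carrier G" using N normal_imp_subgroup subgroup.subset by blast
  define S1 where "S1 = {h [^] p | h. h \<in> gm k}"
  define S2 where "S2 = {cm h k' | h k'. h \<in> carrier G \<and> k' \<in> gm k}"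
  have S1c: "S1 \<subseteq> carrier G" using sub by (auto simp: S1_def)
  have S2c: "S2 \<subseteq> carrier G" using sub by (auto simp: S2_def)
  have S1i: "\<phi> ` S1 \<subseteq> S1" if "\<phi> \<in> hom G G" for \<phi>
  proof
    fix y assume "y \<in> \<phi> ` S1"
    then obtain h where "h \<in> gm k" "y = \<phi> (h [^] p)" unfolding S1_def by blast
    moreover have "\<phi> (h [^] p) = \<phi> h [^] p" using that \<open>h \<in> gm k\<close> sub
      by (meson hom_nat_pow is_group subsetD)
    moreover have "\<phi> h \<in> gm k" using I[OF that] \<open>h \<in> gm k\<close> by blast
    ultimately show "y \<in> S1" unfolding S1_def by blast
  qed
  have S2i: "\<phi> ` S2 \<subseteq> S2" if "\<phi> \<in> hom G G" for \<phi>
  proof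
    fix y assume "y \<in> \<phi> ` S2"
    then obtain h k' where hk: "h \<in> carrier G" "k' \<in> gm k" "y = \<phi> (cm h k')" unfolding S2_def by blast
    moreover have "\<phi> (cm h k') = cm (\<phi> h) (\<phi> k')" using hk(1,2) sub that hom_cm by blast
    moreover have "\<phi> k' \<in> gm k" using I[OF that] hk(2) by blast
    moreover have "\<phi> h \<in> carrier G" using that hk(1) by (rule hom_in_carrier)
    ultimately show "y \<in> S2" unfolding S2_def by blast
  qed
  have P: "generate G S1 \<lhd> G"
  proof (rule normal_of_invariant[OF generate_is_subgroup[OF S1c]])
    fix \<phi> :: "'a \<Rightarrow> 'a" assume a: "\<phi> \<in> hom G G"
    show "\<phi> ` generate G S1 \<subseteq> generate G S1" by (rule endo_generate[OF a S1c S1i[OF a]])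
  qed
  have C: "generate G S2 \<lhd> G"
  proof (rule normal_of_invariant[OF generate_is_subgroup[OF S2c]])
    fix \<phi> :: "'a \<Rightarrow> 'a" assume a: "\<phi> \<in> hom G G"
    show "\<phi> ` generate G S2 \<subseteq> generate G S2" by (rule endo_generate[OF a S2c S2i[OF a]])
  qed
  have eq: "gm (Suc k) = generate G S1 <#> generate G S2"
    by (simp add: pow_subgroup_def comm_subgroup_def S1_def S2_def cm_def)
  have F1: "gm (Suc k) \<lhd> G" unfolding eq by (rule normal_subgroup_set_mult_closed[OF P C])
  have F2: "\<phi> ` gm (Suc k) \<subseteq> gm (Suc k)" if "\<phi> \<in> hom G G" for \<phi>
  proof
    fix y assume "y \<in> \<phi> ` gm (Suc k)"
    then obtain y' where "y' \<in> generate G S1 <#> generate G S2" "y = \<phi> y'"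
      unfolding eq by blast
    then obtain a b where ab: "a \<in> generate G S1" "b \<in> generate G S2" "y = \<phi> (a \<otimes> b)"
      unfolding set_mult_mem by blast
    have ac: "a \<in> carrier G" "b \<in> carrier G"
      using generate_in_carrier[OF S1c ab(1)] generate_in_carrier[OF S2c ab(2)] by auto
    have "y = \<phi> a \<otimes> \<phi> b" using ab(3) hom_mult[OF that ac] by simp
    moreover have "\<phi> a \<in> generate G S1" using endo_generate[OF that S1c S1i[OF that]] ab(1) by blast
    moreover have "\<phi> b \<in> generate G S2" using endo_generate[OF that S2c S2i[OF that]] ab(2) by blast
    ultimately show "y \<in> gm (Suc k)" unfolding eq set_mult_mem by blast
  qed
  show ?case
  proof (intro conjI ballI)
    show "gm (Suc k) \<lhd> G" by (rule F1)
  next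
    fix \<phi> :: "'a \<Rightarrow> 'a" assume "\<phi> \<in> hom G G" then show "\<phi> ` gm (Suc k) \<subseteq> gm (Suc k)" by (rule F2)
  qed
qed

end

context group
begin

lemma comm_inv_l: "a \<in> carrier G \<Longrightarrow> b \<in> carrier G \<Longrightarrow> a \<otimes> b = b \<otimes> a \<Longrightarrow> inv a \<otimes> b = b \<otimes> inv a"
proof -
  assume c: "a \<in> carrier G" "b \<in> carrier G" and ab: "a \<otimes> b = b \<otimes> a"
  have "a \<otimes> (b \<otimes> inv a) = a \<otimes> b \<otimes> inv a" using c by (simp add: m_assoc)
  also have "\<dots> = b" using c by (simp add: ab m_assoc)
  finally show ?thesis using c by (simp add: inv_solve_left')
qed

lemma mult_inv_one_iff: "x \<in> carrier G \<Longrightarrow> y \<in> carrier G \<Longrightarrow> (x \<otimes> inv y = \<one>) \<longleftrightarrow> x = y"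
  using inv_solve_right'[of "\<one>" x y] by simp

lemma cm_one_iff: "a \<in> carrier G \<Longrightarrow> b \<in> carrier G \<Longrightarrow> (a \<otimes> b \<otimes> inv a \<otimes> inv b = \<one>) \<longleftrightarrow> a \<otimes> b = b \<otimes> a"
proof -
  assume c: "a \<in> carrier G" "b \<in> carrier G"
  have "a \<otimes> b \<otimes> inv a \<otimes> inv b = (a \<otimes> b) \<otimes> inv (b \<otimes> a)" using c by (simp add: m_assoc inv_mult_group)
  then show ?thesis using c mult_inv_one_iff by simp
qed

lemma pow_comm: "a \<in> carrier G \<Longrightarrow> b \<in> carrier G \<Longrightarrow> a \<otimes> b = b \<otimes> a \<Longrightarrow> a [^] (n::nat) \<otimes> b = b \<otimes> a [^] n"
proof (induction n)
  case 0 then show ?case by simp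
next
  case (Suc n)
  have "a [^] Suc n \<otimes> b = a [^] n \<otimes> (a \<otimes> b)" using Suc.prems by (simp add: m_assoc)
  also have "\<dots> = (a [^] n \<otimes> b) \<otimes> a" using Suc.prems by (simp add: m_assoc)
  also have "\<dots> = b \<otimes> a [^] Suc n" using Suc by (simp add: m_assoc)
  finally show ?case .
qed

lemma conj_pow_shift:
  assumes c: "g \<in> carrier G" "x \<in> carrier G" "c \<in> carrier G"
    and e: "g \<otimes> x = c \<otimes> x \<otimes> g" and gc: "g \<otimes> c = c \<otimes> g"
  shows "g [^] (n::nat) \<otimes> x = c [^] n \<otimes> x \<otimes> g [^] n"
proof (induction n)
  case 0 then show ?case using c by simp
next
  case (Suc n)
  have gs: "g [^] Suc n = g \<otimes> g [^] n" by (rule nat_pow_Suc2[OF c(1)])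
  have cs: "c [^] Suc n = c [^] n \<otimes> c" by simp
  have pc: "g \<otimes> c [^] n = c [^] n \<otimes> g" using pow_comm[OF c(3) c(1) gc[symmetric]] by simp
  have "g [^] Suc n \<otimes> x = g \<otimes> (g [^] n \<otimes> x)" using c by (simp only: gs) (simp add: m_assoc)
  also have "\<dots> = g \<otimes> (c [^] n \<otimes> x \<otimes> g [^] n)" using Suc by simp
  also have "\<dots> = (g \<otimes> c [^] n) \<otimes> x \<otimes> g [^] n" using c by (simp add: m_assoc)
  also have "\<dots> = c [^] n \<otimes> (g \<otimes> x) \<otimes> g [^] n" using c by (simp only: pc) (simp add: m_assoc)
  also have "\<dots> = c [^] n \<otimes> (c \<otimes> x \<otimes> g) \<otimes> g [^] n" using e by simp
  also have "\<dots> = c [^] Suc n \<otimes> x \<otimes> g [^] Suc n" using c by (simp only: gs cs) (simp add: m_assoc)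
  finally show ?case .
qed

lemma swap_conj:
  assumes c: "g \<in> carrier G" "h \<in> carrier G" "x \<in> carrier G" "a \<in> carrier G" "b \<in> carrier G"
    and eg: "g \<otimes> x = a \<otimes> x \<otimes> g" and eh: "h \<otimes> x = b \<otimes> x \<otimes> h"
    and ga: "g \<otimes> b = b \<otimes> g"
  shows "g \<otimes> h \<otimes> x = b \<otimes> a \<otimes> x \<otimes> (g \<otimes> h)"
proof -
  have "g \<otimes> h \<otimes> x = g \<otimes> (h \<otimes> x)" using c by (simp add: m_assoc)
  also have "\<dots> = (g \<otimes> b) \<otimes> x \<otimes> h" using c eh by (simp add: m_assoc)
  also have "\<dots> = b \<otimes> (g \<otimes> x) \<otimes> h" using c ga by (simp add: m_assoc)
  also have "\<dots> = b \<otimes> a \<otimes> x \<otimes> (g \<otimes> h)" using c eg by (simp add: m_assoc)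
  finally show ?thesis .
qed

lemma sub_pow_closed: "subgroup H G \<Longrightarrow> x \<in> H \<Longrightarrow> x [^] (n::nat) \<in> H"
  by (induction n) (auto simp: subgroup.one_closed subgroup.m_closed)

lemma q_hom: "N \<lhd> G \<Longrightarrow> (\<lambda>x. N #> x) \<in> hom G (G Mod N)"
  using normal.r_coset_hom_Mod by fastforce

lemma q_group: "N \<lhd> G \<Longrightarrow> group (G Mod N)"
  by (rule normal.factorgroup_is_group)

lemma q_mult: "N \<lhd> G \<Longrightarrow> x \<in> carrier G \<Longrightarrow> y \<in> carrier G \<Longrightarrow> N #> (x \<otimes> y) = (N #> x) \<otimes>\<^bsub>G Mod N\<^esub> (N #> y)"
  using hom_mult[OF q_hom] by blast

lemma q_carr: "N \<lhd> G \<Longrightarrow> x \<in> carrier G \<Longrightarrow> N #> x \<in> carrier (G Mod N)"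
  using hom_in_carrier[OF q_hom] by blast

lemma q_inv: "N \<lhd> G \<Longrightarrow> x \<in> carrier G \<Longrightarrow> N #> (inv x) = inv\<^bsub>G Mod N\<^esub> (N #> x)"
  using group_hom.hom_inv[of G "G Mod N" "\<lambda>x. N #> x"] q_hom q_group
  by (simp add: group_hom_def group_hom_axioms_def is_group)

lemma q_pow: "N \<lhd> G \<Longrightarrow> x \<in> carrier G \<Longrightarrow> N #> (x [^] (n::nat)) = (N #> x) [^]\<^bsub>G Mod N\<^esub> n"
  using hom_nat_pow[OF q_hom _ is_group q_group] by blast

lemma q_one_iff: "N \<lhd> G \<Longrightarrow> x \<in> carrier G \<Longrightarrow> (N #> x = \<one>\<^bsub>G Mod N\<^esub>) \<longleftrightarrow> x \<in> N"
  by (metis coset_join1 coset_join2 normal_imp_subgroup one_FactGroup)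

lemma q_eq_iff: "N \<lhd> G \<Longrightarrow> x \<in> carrier G \<Longrightarrow> y \<in> carrier G \<Longrightarrow> (N #> x = N #> y) \<longleftrightarrow> x \<otimes> inv y \<in> N"
proof -
  assume N: "N \<lhd> G" and c: "x \<in> carrier G" "y \<in> carrier G"
  interpret Q: group "G Mod N" by (rule q_group[OF N])
  have "x \<otimes> inv y \<in> N \<longleftrightarrow> (N #> x) \<otimes>\<^bsub>G Mod N\<^esub> inv\<^bsub>G Mod N\<^esub> (N #> y) = \<one>\<^bsub>G Mod N\<^esub>"
    using q_one_iff[OF N, of "x \<otimes> inv y"] c q_mult[OF N] q_inv[OF N] by simp
  also have "\<dots> \<longleftrightarrow> N #> x = N #> y"
    using q_carr[OF N] c by (metis Q.inv_closed Q.inv_equality Q.inv_inv Q.r_inv)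
  finally show ?thesis by simp
qed

end

context lpc
begin

lemma gm_Suc_eq: "gm (Suc k) = generate G {h [^] p | h. h \<in> gm k} <#> generate G {cm h k' | h k'. h \<in> carrier G \<and> k' \<in> gm k}"
  by (simp add: pow_subgroup_def comm_subgroup_def cm_def)

lemma gm_normal: "gm k \<lhd> G" using gm_props by blast

lemma gm_sub: "subgroup (gm k) G" using gm_normal normal_imp_subgroup by blast

lemma gm_carrier: "gm k \<subseteq> carrier G" using gm_sub subgroup.subset by blast

lemma gm_carrier': "x \<in> gm k \<Longrightarrow> x \<in> carrier G" using gm_carrier by blast

lemma gm_endo: "\<phi> \<in> hom G G \<Longrightarrow> x \<in> gm k \<Longrightarrow> \<phi> x \<in> gm k" using gm_props by blast

lemma gm_S1c: "{h [^] p | h. h \<in> gm k} \<subseteq> carrier G" using gm_carrier by auto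
lemma gm_S2c: "{cm h k' | h k'. h \<in> carrier G \<and> k' \<in> gm k} \<subseteq> carrier G" by (auto intro!: cm_closed dest: gm_carrier')

lemma gm_pow: "x \<in> gm k \<Longrightarrow> x [^] p \<in> gm (Suc k)"
proof -
  assume x: "x \<in> gm k"
  have "x [^] p \<in> generate G {h [^] p | h. h \<in> gm k}" using x by (auto intro: generate.incl)
  moreover have "\<one> \<in> generate G {cm h k' | h k'. h \<in> carrier G \<and> k' \<in> gm k}" by (rule generate.one)
  moreover have "x [^] p = x [^] p \<otimes> \<one>" using x gm_carrier' by simp
  ultimately show ?thesis unfolding gm_Suc_eq set_mult_mem by blast
qed

lemma gm_cm: "g \<in> carrier G \<Longrightarrow> x \<in> gm k \<Longrightarrow> cm g x \<in> gm (Suc k)"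
proof -
  assume x: "x \<in> gm k" and g: "g \<in> carrier G"
  have "cm g x \<in> generate G {cm h k' | h k'. h \<in> carrier G \<and> k' \<in> gm k}" using x g by (auto intro: generate.incl)
  moreover have "\<one> \<in> generate G {h [^] p | h. h \<in> gm k}" by (rule generate.one)
  moreover have "cm g x = \<one> \<otimes> cm g x" using x g gm_carrier' by simp
  ultimately show ?thesis unfolding gm_Suc_eq set_mult_mem by blast
qed

lemma gm_least:
  assumes H: "subgroup H G" and p1: "\<And>x. x \<in> gm k \<Longrightarrow> x [^] p \<in> H"
    and p2: "\<And>g x. g \<in> carrier G \<Longrightarrow> x \<in> gm k \<Longrightarrow> cm g x \<in> H"
  shows "gm (Suc k) \<subseteq> H"
proof -
  have A: "generate G {h [^] p | h. h \<in> gm k} \<subseteq> H"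
    by (rule generate_subgroup_incl[OF _ H]) (auto intro: p1)
  have B: "generate G {cm h k' | h k'. h \<in> carrier G \<and> k' \<in> gm k} \<subseteq> H"
    by (rule generate_subgroup_incl[OF _ H]) (auto intro: p2)
  show ?thesis
  proof
    fix y assume "y \<in> gm (Suc k)"
    then obtain a b where ab: "a \<in> generate G {h [^] p | h. h \<in> gm k}"
      "b \<in> generate G {cm h k' | h k'. h \<in> carrier G \<and> k' \<in> gm k}" "y = a \<otimes> b"
      unfolding gm_Suc_eq set_mult_mem by blast
    have "a \<in> H" "b \<in> H" using ab(1,2) A B by auto
    then show "y \<in> H" using ab(3) subgroup.m_closed[OF H] by simp
  qed
qed

lemma gm_mono_Suc: "gm (Suc k) \<subseteq> gm k"
proof (rule gm_least[OF gm_sub])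
  fix x assume "x \<in> gm k" then show "x [^] p \<in> gm k" by (rule sub_pow_closed[OF gm_sub])
next
  fix g x assume g: "g \<in> carrier G" and x: "x \<in> gm k"
  have xc: "x \<in> carrier G" by (rule gm_carrier'[OF x])
  have "g \<otimes> x \<otimes> inv g \<in> gm k" by (rule normal.inv_op_closed2[OF gm_normal g x])
  moreover have "inv x \<in> gm k" by (rule subgroup.m_inv_closed[OF gm_sub x])
  ultimately have "g \<otimes> x \<otimes> inv g \<otimes> inv x \<in> gm k" by (rule subgroup.m_closed[OF gm_sub])
  then show "cm g x \<in> gm k" by (simp add: cm_def)
qed

lemma gm_mono: "k \<le> m \<Longrightarrow> gm m \<subseteq> gm k"
proof (induction m)
  case 0 then show ?case by simp
next
  case (Suc m) then show ?case using gm_mono_Suc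
    by (metis le_Suc_eq order_refl order_trans)
qed

end

context group
begin

lemma cmt_mult: "a \<in> carrier G \<Longrightarrow> b \<in> carrier G \<Longrightarrow> c \<in> carrier G \<Longrightarrow> a \<otimes> b = b \<otimes> a \<Longrightarrow> a \<otimes> c = c \<otimes> a
   \<Longrightarrow> a \<otimes> (b \<otimes> c) = (b \<otimes> c) \<otimes> a"
proof -
  assume c: "a \<in> carrier G" "b \<in> carrier G" "c \<in> carrier G" and ab: "a \<otimes> b = b \<otimes> a" and ac: "a \<otimes> c = c \<otimes> a"
  have "a \<otimes> (b \<otimes> c) = (a \<otimes> b) \<otimes> c" using c by (simp add: m_assoc)
  also have "\<dots> = b \<otimes> (a \<otimes> c)" using c ab by (simp add: m_assoc)
  also have "\<dots> = (b \<otimes> c) \<otimes> a" using c ac by (simp add: m_assoc)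
  finally show ?thesis .
qed

lemma cmt_inv: "a \<in> carrier G \<Longrightarrow> b \<in> carrier G \<Longrightarrow> a \<otimes> b = b \<otimes> a \<Longrightarrow> a \<otimes> inv b = inv b \<otimes> a"
  using comm_inv_l[of b a] by simp

lemma cm_rel: "w \<in> carrier G \<Longrightarrow> x \<in> carrier G \<Longrightarrow> w \<otimes> x = (w \<otimes> x \<otimes> inv w \<otimes> inv x) \<otimes> x \<otimes> w"
  by (simp add: m_assoc)

lemma ga6:
  assumes c: "ma \<in> carrier G" "mb \<in> carrier G" "ka \<in> carrier G" "y \<in> carrier G" "x \<in> carrier G"
    and e1: "ma \<otimes> y = ka \<otimes> y \<otimes> ma" and e2: "mb \<otimes> y = ka \<otimes> y \<otimes> mb" and e3: "x \<otimes> mb = mb \<otimes> y"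
  shows "ma \<otimes> inv mb \<otimes> x = x \<otimes> (ma \<otimes> inv mb)"
proof -
  have "x \<otimes> mb = ka \<otimes> y \<otimes> mb" using e2 e3 by simp
  then have xK: "x = ka \<otimes> y" using c by (metis m_closed right_cancel)
  have "inv mb \<otimes> x \<otimes> mb = inv mb \<otimes> (mb \<otimes> y)" using c e3 by (simp add: m_assoc)
  also have "\<dots> = y" using c by (simp add: m_assoc[symmetric])
  finally have y: "y = inv mb \<otimes> x \<otimes> mb" by simp
  have "ma \<otimes> inv mb \<otimes> x \<otimes> mb = ma \<otimes> y" using y c by (simp add: m_assoc)
  also have "\<dots> = x \<otimes> ma" using e1 xK by simp
  finally have "ma \<otimes> inv mb \<otimes> x \<otimes> mb = x \<otimes> ma" .
  then have "ma \<otimes> inv mb \<otimes> x = x \<otimes> ma \<otimes> inv mb" using c by (simp add: inv_solve_right)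
  then show ?thesis using c by (simp add: m_assoc)
qed

lemma ga7:
  assumes c: "wa \<in> carrier G" "ga \<in> carrier G" "za \<in> carrier G" "xa \<in> carrier G"
    and zw: "za \<otimes> wa = wa \<otimes> za" and zg: "za \<otimes> ga = ga \<otimes> za" and zx: "za \<otimes> xa = xa \<otimes> za"
    and wu: "wa \<otimes> (ga \<otimes> xa \<otimes> inv ga) = (ga \<otimes> xa \<otimes> inv ga) \<otimes> wa"
  shows "(wa \<otimes> ga) \<otimes> (za \<otimes> xa) \<otimes> inv (wa \<otimes> ga) \<otimes> inv (za \<otimes> xa) = ga \<otimes> xa \<otimes> inv ga \<otimes> inv xa"
proof -
  define va where "va = wa \<otimes> ga"
  have va: "va \<in> carrier G" using c by (simp add: va_def)
  have zv: "za \<otimes> va = va \<otimes> za" unfolding va_def using cmt_mult[OF c(3) c(1) c(2) zw zg] .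
  define ra where "ra = va \<otimes> xa \<otimes> inv va \<otimes> inv xa"
  have ra: "ra \<in> carrier G" using c va by (simp add: ra_def)
  have zr: "za \<otimes> ra = ra \<otimes> za"
  proof -
    have 1: "za \<otimes> (va \<otimes> xa) = (va \<otimes> xa) \<otimes> za" by (rule cmt_mult[OF c(3) va c(4) zv zx])
    have 2: "za \<otimes> (inv va \<otimes> inv xa) = (inv va \<otimes> inv xa) \<otimes> za"
      by (rule cmt_mult[OF c(3) inv_closed[OF va] inv_closed[OF c(4)] cmt_inv[OF c(3) va zv] cmt_inv[OF c(3) c(4) zx]])
    have "za \<otimes> ((va \<otimes> xa) \<otimes> (inv va \<otimes> inv xa)) = ((va \<otimes> xa) \<otimes> (inv va \<otimes> inv xa)) \<otimes> za"
      by (rule cmt_mult[OF c(3) _ _ 1 2]) (use c va in simp_all)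
    then show ?thesis unfolding ra_def using c va by (simp add: m_assoc)
  qed
  have "va \<otimes> (za \<otimes> xa) \<otimes> inv va \<otimes> inv (za \<otimes> xa) = (za \<otimes> va) \<otimes> xa \<otimes> inv va \<otimes> inv xa \<otimes> inv za"
    using c va zv by (simp add: m_assoc inv_mult_group)
  also have "\<dots> = za \<otimes> ra \<otimes> inv za" using c va by (simp add: ra_def m_assoc)
  also have "\<dots> = ra" using zr c ra by (simp add: m_assoc)
  also have "\<dots> = wa \<otimes> (ga \<otimes> xa \<otimes> inv ga) \<otimes> inv wa \<otimes> inv xa"
    using c by (simp add: ra_def va_def m_assoc inv_mult_group)
  also have "\<dots> = ga \<otimes> xa \<otimes> inv ga \<otimes> inv xa" using c wu by (simp add: m_assoc)
  finally show ?thesis by (simp add: va_def)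
qed

lemma centralizer_q_sub:
  assumes N: "N \<lhd> G" and Xs: "Xs \<subseteq> carrier G"
  shows "subgroup {w \<in> carrier G. \<forall>x\<in>Xs. (N #> w) \<otimes>\<^bsub>G Mod N\<^esub> (N #> x) = (N #> x) \<otimes>\<^bsub>G Mod N\<^esub> (N #> w)} G"
    (is "subgroup ?P G")
proof (rule subgroupI)
  interpret Q: group "G Mod N" by (rule q_group[OF N])
  show "?P \<subseteq> carrier G" by blast
  show "?P \<noteq> {}"
  proof -
    have o: "N #> \<one> = \<one>\<^bsub>G Mod N\<^esub>"
      using q_one_iff[OF N] subgroup.one_closed[OF normal_imp_subgroup[OF N]] by simp
    have "\<forall>x\<in>Xs. (N #> \<one>) \<otimes>\<^bsub>G Mod N\<^esub> (N #> x) = (N #> x) \<otimes>\<^bsub>G Mod N\<^esub> (N #> \<one>)"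
    proof
      fix x assume "x \<in> Xs"
      then have c: "N #> x \<in> carrier (G Mod N)" using Xs q_carr[OF N] by blast
      show "(N #> \<one>) \<otimes>\<^bsub>G Mod N\<^esub> (N #> x) = (N #> x) \<otimes>\<^bsub>G Mod N\<^esub> (N #> \<one>)"
        by (simp only: o Q.l_one[OF c] Q.r_one[OF c])
    qed
    then have "\<one> \<in> ?P" by simp
    then show ?thesis by blast
  qed
  fix a assume a: "a \<in> ?P"
  then have ac: "a \<in> carrier G" by blast
  show "inv a \<in> ?P"
  proof (intro CollectI conjI ballI)
    show "inv a \<in> carrier G" using ac by simp
    fix x assume x: "x \<in> Xs"
    then have xc: "x \<in> carrier G" using Xs by blast
    have "(N #> a) \<otimes>\<^bsub>G Mod N\<^esub> (N #> x) = (N #> x) \<otimes>\<^bsub>G Mod N\<^esub> (N #> a)" using a x by blast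
    then show "(N #> inv a) \<otimes>\<^bsub>G Mod N\<^esub> (N #> x) = (N #> x) \<otimes>\<^bsub>G Mod N\<^esub> (N #> inv a)"
      using Q.comm_inv_l q_carr[OF N ac] q_carr[OF N xc] q_inv[OF N ac] by simp
  qed
  fix b assume b: "b \<in> ?P"
  then have bc: "b \<in> carrier G" by blast
  show "a \<otimes> b \<in> ?P"
  proof (intro CollectI conjI ballI)
    show "a \<otimes> b \<in> carrier G" using ac bc by simp
    fix x assume x: "x \<in> Xs"
    then have xc: "x \<in> carrier G" using Xs by blast
    have 1: "(N #> x) \<otimes>\<^bsub>G Mod N\<^esub> (N #> a) = (N #> a) \<otimes>\<^bsub>G Mod N\<^esub> (N #> x)" using a x by simp
    have 2: "(N #> x) \<otimes>\<^bsub>G Mod N\<^esub> (N #> b) = (N #> b) \<otimes>\<^bsub>G Mod N\<^esub> (N #> x)" using b x by simp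
    have "(N #> x) \<otimes>\<^bsub>G Mod N\<^esub> ((N #> a) \<otimes>\<^bsub>G Mod N\<^esub> (N #> b)) = ((N #> a) \<otimes>\<^bsub>G Mod N\<^esub> (N #> b)) \<otimes>\<^bsub>G Mod N\<^esub> (N #> x)"
      by (rule Q.cmt_mult[OF q_carr[OF N xc] q_carr[OF N ac] q_carr[OF N bc] 1 2])
    then show "(N #> (a \<otimes> b)) \<otimes>\<^bsub>G Mod N\<^esub> (N #> x) = (N #> x) \<otimes>\<^bsub>G Mod N\<^esub> (N #> (a \<otimes> b))"
      using q_mult[OF N ac bc] by simp
  qed
qed

end


declare lpc_aux.simps(2)[simp del] mult_FactGroup[simp del] one_FactGroup[simp del]

context lpc
begin

lemma cm_in_iff:
  assumes N: "N \<lhd> G" and c: "a \<in> carrier G" "b \<in> carrier G"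
  shows "cm a b \<in> N \<longleftrightarrow> (N #> a) \<otimes>\<^bsub>G Mod N\<^esub> (N #> b) = (N #> b) \<otimes>\<^bsub>G Mod N\<^esub> (N #> a)"
proof -
  interpret Q: group "G Mod N" by (rule q_group[OF N])
  have "cm a b \<in> N \<longleftrightarrow> N #> cm a b = \<one>\<^bsub>G Mod N\<^esub>" using q_one_iff[OF N] c by simp
  also have "N #> cm a b = (N #> a) \<otimes>\<^bsub>G Mod N\<^esub> (N #> b) \<otimes>\<^bsub>G Mod N\<^esub> inv\<^bsub>G Mod N\<^esub> (N #> a) \<otimes>\<^bsub>G Mod N\<^esub> inv\<^bsub>G Mod N\<^esub> (N #> b)"
    using c by (simp add: cm_def q_mult[OF N] q_inv[OF N])
  finally show ?thesis using Q.cm_one_iff q_carr[OF N] c by simp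
qed

lemma central:
  assumes z: "z \<in> gm (Suc k)" and y: "y \<in> carrier G"
  shows "(gm (Suc (Suc k)) #> z) \<otimes>\<^bsub>G Mod gm (Suc (Suc k))\<^esub> (gm (Suc (Suc k)) #> y)
       = (gm (Suc (Suc k)) #> y) \<otimes>\<^bsub>G Mod gm (Suc (Suc k))\<^esub> (gm (Suc (Suc k)) #> z)"
  using cm_in_iff[OF gm_normal y gm_carrier'[OF z]] gm_cm[OF y z] by simp

lemma gm1_comm:
  assumes w: "w \<in> gm (Suc 0)" and x: "x \<in> gm k"
  shows "cm w x \<in> gm (Suc (Suc k))"
proof -
  define N where "N = gm (Suc (Suc k))"
  have N: "N \<lhd> G" unfolding N_def by (rule gm_normal)
  interpret Q: group "G Mod N" by (rule q_group[OF N])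
  let ?Q = "G Mod N"
  have cen: "\<And>z y. z \<in> gm (Suc k) \<Longrightarrow> y \<in> carrier G \<Longrightarrow> (N #> z) \<otimes>\<^bsub>?Q\<^esub> (N #> y) = (N #> y) \<otimes>\<^bsub>?Q\<^esub> (N #> z)"
    unfolding N_def by (rule central)
  have qc: "\<And>y. y \<in> carrier G \<Longrightarrow> N #> y \<in> carrier ?Q" by (rule q_carr[OF N])
  have qm: "\<And>a b. a \<in> carrier G \<Longrightarrow> b \<in> carrier G \<Longrightarrow> N #> (a \<otimes> b) = (N #> a) \<otimes>\<^bsub>?Q\<^esub> (N #> b)"
    by (rule q_mult[OF N])
  define P where "P = {w \<in> carrier G. \<forall>x\<in>gm k. (N #> w) \<otimes>\<^bsub>?Q\<^esub> (N #> x) = (N #> x) \<otimes>\<^bsub>?Q\<^esub> (N #> w)}"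
  have P: "subgroup P G" unfolding P_def by (rule centralizer_q_sub[OF N gm_carrier])
  have "gm (Suc 0) \<subseteq> P"
  proof (rule gm_least[OF P])
    fix g assume "g \<in> gm 0"
    then have g: "g \<in> carrier G" by simp
    show "g [^] p \<in> P" unfolding P_def
    proof (intro CollectI conjI ballI)
      show "g [^] p \<in> carrier G" using g by simp
      fix x assume x: "x \<in> gm k"
      have xc: "x \<in> carrier G" by (rule gm_carrier'[OF x])
      define c where "c = cm g x"
      have c1: "c \<in> gm (Suc k)" unfolding c_def by (rule gm_cm[OF g x])
      have cc: "c \<in> carrier G" by (rule gm_carrier'[OF c1])
      have e: "g \<otimes> x = c \<otimes> x \<otimes> g" unfolding c_def cm_def using g xc by (rule cm_rel)
      have eq: "(N #> g) \<otimes>\<^bsub>?Q\<^esub> (N #> x) = (N #> c) \<otimes>\<^bsub>?Q\<^esub> (N #> x) \<otimes>\<^bsub>?Q\<^esub> (N #> g)"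
        using e g xc cc by (simp only: qm[symmetric] m_closed)
      have gc: "(N #> g) \<otimes>\<^bsub>?Q\<^esub> (N #> c) = (N #> c) \<otimes>\<^bsub>?Q\<^esub> (N #> g)" using cen[OF c1 g] by simp
      have sh: "(N #> g) [^]\<^bsub>?Q\<^esub> p \<otimes>\<^bsub>?Q\<^esub> (N #> x) = (N #> c) [^]\<^bsub>?Q\<^esub> p \<otimes>\<^bsub>?Q\<^esub> (N #> x) \<otimes>\<^bsub>?Q\<^esub> (N #> g) [^]\<^bsub>?Q\<^esub> p"
        by (rule Q.conj_pow_shift[OF qc[OF g] qc[OF xc] qc[OF cc] eq gc])
      have e1: "c [^] p \<in> N" using gm_pow[OF c1] unfolding N_def .
      have "(N #> c) [^]\<^bsub>?Q\<^esub> p = N #> (c [^] p)" using q_pow[OF N cc] by simp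
      also have "\<dots> = \<one>\<^bsub>?Q\<^esub>" using q_one_iff[OF N, of "c [^] p"] e1 cc by simp
      finally have "(N #> c) [^]\<^bsub>?Q\<^esub> p = \<one>\<^bsub>?Q\<^esub>" .
      then have "(N #> g) [^]\<^bsub>?Q\<^esub> p \<otimes>\<^bsub>?Q\<^esub> (N #> x) = (N #> x) \<otimes>\<^bsub>?Q\<^esub> (N #> g) [^]\<^bsub>?Q\<^esub> p"
        using sh qc[OF xc] by simp
      then show "(N #> g [^] p) \<otimes>\<^bsub>?Q\<^esub> (N #> x) = (N #> x) \<otimes>\<^bsub>?Q\<^esub> (N #> g [^] p)"
        using q_pow[OF N g] by simp
    qed
  next
    fix g h assume g: "g \<in> carrier G" and "h \<in> gm 0"
    then have h: "h \<in> carrier G" by simp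
    show "cm g h \<in> P" unfolding P_def
    proof (intro CollectI conjI ballI)
      show "cm g h \<in> carrier G" using g h by simp
      fix x assume x: "x \<in> gm k"
      have xc: "x \<in> carrier G" by (rule gm_carrier'[OF x])
      have hg: "h \<otimes> g \<in> carrier G" using g h by simp
      define y where "y = inv (h \<otimes> g) \<otimes> x \<otimes> (h \<otimes> g)"
      have y1: "y \<in> gm k" unfolding y_def by (rule normal.inv_op_closed1[OF gm_normal hg x])
      have yc: "y \<in> carrier G" by (rule gm_carrier'[OF y1])
      define a where "a = cm g y"
      define b where "b = cm h y"
      have a1: "a \<in> gm (Suc k)" unfolding a_def by (rule gm_cm[OF g y1])
      have b1: "b \<in> gm (Suc k)" unfolding b_def by (rule gm_cm[OF h y1])
      have ac: "a \<in> carrier G" by (rule gm_carrier'[OF a1])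
      have bc: "b \<in> carrier G" by (rule gm_carrier'[OF b1])
      have ea: "g \<otimes> y = a \<otimes> y \<otimes> g" unfolding a_def cm_def using g yc by (rule cm_rel)
      have eb: "h \<otimes> y = b \<otimes> y \<otimes> h" unfolding b_def cm_def using h yc by (rule cm_rel)
      have ex: "x \<otimes> (h \<otimes> g) = (h \<otimes> g) \<otimes> y" unfolding y_def using hg xc
        by (simp add: m_assoc[symmetric])
      let ?g = "N #> g" and ?h = "N #> h" and ?x = "N #> x" and ?y = "N #> y" and ?a = "N #> a" and ?b = "N #> b"
      have Ea: "?g \<otimes>\<^bsub>?Q\<^esub> ?y = ?a \<otimes>\<^bsub>?Q\<^esub> ?y \<otimes>\<^bsub>?Q\<^esub> ?g"
        using ea g yc ac by (simp only: qm[symmetric] m_closed)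
      have Eb: "?h \<otimes>\<^bsub>?Q\<^esub> ?y = ?b \<otimes>\<^bsub>?Q\<^esub> ?y \<otimes>\<^bsub>?Q\<^esub> ?h"
        using eb h yc bc by (simp only: qm[symmetric] m_closed)
      have Ex: "?x \<otimes>\<^bsub>?Q\<^esub> (?h \<otimes>\<^bsub>?Q\<^esub> ?g) = (?h \<otimes>\<^bsub>?Q\<^esub> ?g) \<otimes>\<^bsub>?Q\<^esub> ?y"
        using ex g h xc yc by (simp only: qm[symmetric] m_closed)
      have gb: "?g \<otimes>\<^bsub>?Q\<^esub> ?b = ?b \<otimes>\<^bsub>?Q\<^esub> ?g" using cen[OF b1 g] by simp
      have ha: "?h \<otimes>\<^bsub>?Q\<^esub> ?a = ?a \<otimes>\<^bsub>?Q\<^esub> ?h" using cen[OF a1 h] by simp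
      have ab: "?a \<otimes>\<^bsub>?Q\<^esub> ?b = ?b \<otimes>\<^bsub>?Q\<^esub> ?a" using cen[OF a1 bc] by simp
      have S1: "?g \<otimes>\<^bsub>?Q\<^esub> ?h \<otimes>\<^bsub>?Q\<^esub> ?y = ?b \<otimes>\<^bsub>?Q\<^esub> ?a \<otimes>\<^bsub>?Q\<^esub> ?y \<otimes>\<^bsub>?Q\<^esub> (?g \<otimes>\<^bsub>?Q\<^esub> ?h)"
        by (rule Q.swap_conj[OF qc[OF g] qc[OF h] qc[OF yc] qc[OF ac] qc[OF bc] Ea Eb gb])
      have S2: "?h \<otimes>\<^bsub>?Q\<^esub> ?g \<otimes>\<^bsub>?Q\<^esub> ?y = ?a \<otimes>\<^bsub>?Q\<^esub> ?b \<otimes>\<^bsub>?Q\<^esub> ?y \<otimes>\<^bsub>?Q\<^esub> (?h \<otimes>\<^bsub>?Q\<^esub> ?g)"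
        by (rule Q.swap_conj[OF qc[OF h] qc[OF g] qc[OF yc] qc[OF bc] qc[OF ac] Eb Ea ha])
      have S2': "?h \<otimes>\<^bsub>?Q\<^esub> ?g \<otimes>\<^bsub>?Q\<^esub> ?y = ?b \<otimes>\<^bsub>?Q\<^esub> ?a \<otimes>\<^bsub>?Q\<^esub> ?y \<otimes>\<^bsub>?Q\<^esub> (?h \<otimes>\<^bsub>?Q\<^esub> ?g)"
        using S2 ab by simp
      have R: "?g \<otimes>\<^bsub>?Q\<^esub> ?h \<otimes>\<^bsub>?Q\<^esub> inv\<^bsub>?Q\<^esub> (?h \<otimes>\<^bsub>?Q\<^esub> ?g) \<otimes>\<^bsub>?Q\<^esub> ?x
          = ?x \<otimes>\<^bsub>?Q\<^esub> (?g \<otimes>\<^bsub>?Q\<^esub> ?h \<otimes>\<^bsub>?Q\<^esub> inv\<^bsub>?Q\<^esub> (?h \<otimes>\<^bsub>?Q\<^esub> ?g))"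
        by (rule Q.ga6[OF _ _ _ qc[OF yc] qc[OF xc] S1 S2' Ex]) (use qc g h ac bc in simp_all)
      have "N #> cm g h = ?g \<otimes>\<^bsub>?Q\<^esub> ?h \<otimes>\<^bsub>?Q\<^esub> inv\<^bsub>?Q\<^esub> (?h \<otimes>\<^bsub>?Q\<^esub> ?g)"
      proof -
        have "cm g h = g \<otimes> h \<otimes> inv (h \<otimes> g)" using g h by (simp add: cm_def inv_mult_group m_assoc)
        then show ?thesis using g h by (simp only: qm q_inv[OF N] m_closed inv_closed)
      qed
      then show "(N #> cm g h) \<otimes>\<^bsub>?Q\<^esub> ?x = ?x \<otimes>\<^bsub>?Q\<^esub> (N #> cm g h)" using R by simp
    qed
  qed
  then have "w \<in> P" using w by blast
  then have "(N #> w) \<otimes>\<^bsub>?Q\<^esub> (N #> x) = (N #> x) \<otimes>\<^bsub>?Q\<^esub> (N #> w)" using x unfolding P_def by blast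
  then show ?thesis using cm_in_iff[OF N] gm_carrier'[OF w] gm_carrier'[OF x] unfolding N_def by simp
qed

end

declare lpc_aux.simps(2)[simp del] mult_FactGroup[simp del] one_FactGroup[simp del]

context group
begin

lemma equalizer_q_sub:
  assumes N: "N \<lhd> G" and a: "a \<in> hom G G"
  shows "subgroup {y \<in> carrier G. N #> a y = N #> y} G" (is "subgroup ?S G")
proof (rule subgroupI)
  interpret Q: group "G Mod N" by (rule q_group[OF N])
  show "?S \<subseteq> carrier G" by blast
  have "a \<one> = \<one>" using hom_one[OF a is_group is_group] .
  then have "\<one> \<in> ?S" by simp
  then show "?S \<noteq> {}" by blast
  fix y assume y: "y \<in> ?S"
  then have yc: "y \<in> carrier G" by blast
  have ayc: "a y \<in> carrier G" using hom_in_carrier[OF a yc] .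
  show "inv y \<in> ?S"
  proof (intro CollectI conjI)
    show "inv y \<in> carrier G" using yc by simp
    have "N #> a (inv y) = N #> inv (a y)" using endo_inv[OF a yc] by simp
    also have "\<dots> = inv\<^bsub>G Mod N\<^esub> (N #> a y)" by (rule q_inv[OF N ayc])
    also have "\<dots> = inv\<^bsub>G Mod N\<^esub> (N #> y)" using y by simp
    also have "\<dots> = N #> inv y" by (rule q_inv[OF N yc, symmetric])
    finally show "N #> a (inv y) = N #> inv y" .
  qed
  fix z assume z: "z \<in> ?S"
  then have zc: "z \<in> carrier G" by blast
  have azc: "a z \<in> carrier G" using hom_in_carrier[OF a zc] .
  show "y \<otimes> z \<in> ?S"
  proof (intro CollectI conjI)
    show "y \<otimes> z \<in> carrier G" using yc zc by simp
    have "N #> a (y \<otimes> z) = N #> (a y \<otimes> a z)" using hom_mult[OF a yc zc] by simp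
    also have "\<dots> = (N #> a y) \<otimes>\<^bsub>G Mod N\<^esub> (N #> a z)" by (rule q_mult[OF N ayc azc])
    also have "\<dots> = (N #> y) \<otimes>\<^bsub>G Mod N\<^esub> (N #> z)" using y z by simp
    also have "\<dots> = N #> (y \<otimes> z)" by (rule q_mult[OF N yc zc, symmetric])
    finally show "N #> a (y \<otimes> z) = N #> (y \<otimes> z)" .
  qed
qed

end

context lpc
begin

lemma triv_L:
  assumes a: "a \<in> hom G G" and t1: "\<forall>g\<in>carrier G. a g \<otimes> inv g \<in> gm (Suc 0)"
  shows "\<forall>x\<in>gm k. a x \<otimes> inv x \<in> gm (Suc k)"
proof (induction k)
  case 0 then show ?case using t1 by simp
next
  case (Suc k)
  define N where "N = gm (Suc (Suc k))"
  have N: "N \<lhd> G" unfolding N_def by (rule gm_normal)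
  interpret Q: group "G Mod N" by (rule q_group[OF N])
  let ?Q = "G Mod N"
  have cen: "\<And>z y. z \<in> gm (Suc k) \<Longrightarrow> y \<in> carrier G \<Longrightarrow> (N #> z) \<otimes>\<^bsub>?Q\<^esub> (N #> y) = (N #> y) \<otimes>\<^bsub>?Q\<^esub> (N #> z)"
    unfolding N_def by (rule central)
  have qc: "\<And>y. y \<in> carrier G \<Longrightarrow> N #> y \<in> carrier ?Q" by (rule q_carr[OF N])
  have qm: "\<And>a b. a \<in> carrier G \<Longrightarrow> b \<in> carrier G \<Longrightarrow> N #> (a \<otimes> b) = (N #> a) \<otimes>\<^bsub>?Q\<^esub> (N #> b)"
    by (rule q_mult[OF N])
  have qi: "\<And>a. a \<in> carrier G \<Longrightarrow> N #> (inv a) = inv\<^bsub>?Q\<^esub> (N #> a)"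
    by (rule q_inv[OF N])
  have ac: "\<And>y. y \<in> carrier G \<Longrightarrow> a y \<in> carrier G" using hom_in_carrier[OF a] by blast
  define S where "S = {y \<in> carrier G. N #> a y = N #> y}"
  have S: "subgroup S G" unfolding S_def by (rule equalizer_q_sub[OF N a])
  have "gm (Suc k) \<subseteq> S"
  proof (rule gm_least[OF S])
    fix x assume x: "x \<in> gm k"
    have xc: "x \<in> carrier G" by (rule gm_carrier'[OF x])
    define z where "z = a x \<otimes> inv x"
    have z1: "z \<in> gm (Suc k)" unfolding z_def using Suc x by blast
    have zc: "z \<in> carrier G" by (rule gm_carrier'[OF z1])
    have axz: "a x = z \<otimes> x" unfolding z_def using xc ac[OF xc] by (simp add: m_assoc)
    have zx: "(N #> z) \<otimes>\<^bsub>?Q\<^esub> (N #> x) = (N #> x) \<otimes>\<^bsub>?Q\<^esub> (N #> z)" by (rule cen[OF z1 xc])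
    have zp: "z [^] p \<in> N" unfolding N_def by (rule gm_pow[OF z1])
    have "N #> a (x [^] p) = N #> (a x [^] p)" using hom_nat_pow[OF a xc is_group is_group] by simp
    also have "\<dots> = (N #> (z \<otimes> x)) [^]\<^bsub>?Q\<^esub> p" using q_pow[OF N] ac[OF xc] axz by simp
    also have "\<dots> = ((N #> z) \<otimes>\<^bsub>?Q\<^esub> (N #> x)) [^]\<^bsub>?Q\<^esub> p" using qm[OF zc xc] by simp
    also have "\<dots> = (N #> z) [^]\<^bsub>?Q\<^esub> p \<otimes>\<^bsub>?Q\<^esub> (N #> x) [^]\<^bsub>?Q\<^esub> p"
      by (rule Q.pow_mult_distrib[OF zx qc[OF zc] qc[OF xc]])
    also have "(N #> z) [^]\<^bsub>?Q\<^esub> p = \<one>\<^bsub>?Q\<^esub>"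
      using q_pow[OF N zc, of p] q_one_iff[OF N, of "z [^] p"] zp zc by simp
    also have "\<one>\<^bsub>?Q\<^esub> \<otimes>\<^bsub>?Q\<^esub> (N #> x) [^]\<^bsub>?Q\<^esub> p = N #> (x [^] p)"
      using q_pow[OF N xc] qc[OF xc] by simp
    finally show "x [^] p \<in> S" unfolding S_def using xc by simp
  next
    fix g x assume g: "g \<in> carrier G" and x: "x \<in> gm k"
    have xc: "x \<in> carrier G" by (rule gm_carrier'[OF x])
    define z where "z = a x \<otimes> inv x"
    have z1: "z \<in> gm (Suc k)" unfolding z_def using Suc x by blast
    have zc: "z \<in> carrier G" by (rule gm_carrier'[OF z1])
    have axz: "a x = z \<otimes> x" unfolding z_def using xc ac[OF xc] by (simp add: m_assoc)
    define w where "w = a g \<otimes> inv g"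
    have w1: "w \<in> gm (Suc 0)" unfolding w_def using t1 g by blast
    have wc: "w \<in> carrier G" by (rule gm_carrier'[OF w1])
    have agw: "a g = w \<otimes> g" unfolding w_def using g ac[OF g] by (simp add: m_assoc)
    define u where "u = g \<otimes> x \<otimes> inv g"
    have u1: "u \<in> gm k" unfolding u_def by (rule normal.inv_op_closed2[OF gm_normal g x])
    have uc: "u \<in> carrier G" by (rule gm_carrier'[OF u1])
    have wu: "(N #> w) \<otimes>\<^bsub>?Q\<^esub> (N #> u) = (N #> u) \<otimes>\<^bsub>?Q\<^esub> (N #> w)"
      using cm_in_iff[OF N wc uc] gm1_comm[OF w1 u1] unfolding N_def by simp
    have Nu: "N #> u = (N #> g) \<otimes>\<^bsub>?Q\<^esub> (N #> x) \<otimes>\<^bsub>?Q\<^esub> inv\<^bsub>?Q\<^esub> (N #> g)"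
      unfolding u_def using g xc by (simp only: qm qi m_closed inv_closed)
    have zw: "(N #> z) \<otimes>\<^bsub>?Q\<^esub> (N #> w) = (N #> w) \<otimes>\<^bsub>?Q\<^esub> (N #> z)" by (rule cen[OF z1 wc])
    have zg: "(N #> z) \<otimes>\<^bsub>?Q\<^esub> (N #> g) = (N #> g) \<otimes>\<^bsub>?Q\<^esub> (N #> z)" by (rule cen[OF z1 g])
    have zx: "(N #> z) \<otimes>\<^bsub>?Q\<^esub> (N #> x) = (N #> x) \<otimes>\<^bsub>?Q\<^esub> (N #> z)" by (rule cen[OF z1 xc])
    have "N #> a (cm g x) = N #> cm (w \<otimes> g) (z \<otimes> x)"
      using hom_cm[OF a g xc] agw axz by simp
    also have "\<dots> = ((N #> w) \<otimes>\<^bsub>?Q\<^esub> (N #> g)) \<otimes>\<^bsub>?Q\<^esub> ((N #> z) \<otimes>\<^bsub>?Q\<^esub> (N #> x))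
        \<otimes>\<^bsub>?Q\<^esub> inv\<^bsub>?Q\<^esub> ((N #> w) \<otimes>\<^bsub>?Q\<^esub> (N #> g)) \<otimes>\<^bsub>?Q\<^esub> inv\<^bsub>?Q\<^esub> ((N #> z) \<otimes>\<^bsub>?Q\<^esub> (N #> x))"
      unfolding cm_def using wc g zc xc by (simp only: qm qi m_closed inv_closed)
    also have "\<dots> = (N #> g) \<otimes>\<^bsub>?Q\<^esub> (N #> x) \<otimes>\<^bsub>?Q\<^esub> inv\<^bsub>?Q\<^esub> (N #> g) \<otimes>\<^bsub>?Q\<^esub> inv\<^bsub>?Q\<^esub> (N #> x)"
      by (rule Q.ga7[OF qc[OF wc] qc[OF g] qc[OF zc] qc[OF xc] zw zg zx]) (use wu Nu in simp)
    also have "\<dots> = N #> cm g x"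
      unfolding cm_def using g xc by (simp only: qm qi m_closed inv_closed)
    finally show "cm g x \<in> S" unfolding S_def using g xc by simp
  qed
  show ?case
  proof
    fix y assume "y \<in> gm (Suc k)"
    then have "y \<in> S" using \<open>gm (Suc k) \<subseteq> S\<close> by blast
    then have yc: "y \<in> carrier G" and e: "N #> a y = N #> y" unfolding S_def by auto
    show "a y \<otimes> inv y \<in> gm (Suc (Suc k))" using q_eq_iff[OF N ac[OF yc] yc] e unfolding N_def by simp
  qed
qed

end

declare lpc_aux.simps(2)[simp del] mult_FactGroup[simp del] one_FactGroup[simp del]

context group
begin

lemma funpow_hom: "a \<in> hom G G \<Longrightarrow> (a ^^ n) \<in> hom G G"
proof (induction n)
  case 0 then show ?case by (auto intro!: homI)
next
  case (Suc n)
  have h: "a ^^ n \<in> hom G G" by (rule Suc.IH[OF Suc.prems])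
  show ?case
  proof (rule homI)
    fix x assume x: "x \<in> carrier G"
    show "(a ^^ Suc n) x \<in> carrier G" using hom_in_carrier[OF Suc.prems hom_in_carrier[OF h x]] by simp
    fix y assume y: "y \<in> carrier G"
    show "(a ^^ Suc n) (x \<otimes> y) = (a ^^ Suc n) x \<otimes> (a ^^ Suc n) y"
      using hom_mult[OF h x y] hom_mult[OF Suc.prems hom_in_carrier[OF h x] hom_in_carrier[OF h y]] by simp
  qed
qed

end

context lpc
begin

lemma DL:
  assumes b: "b \<in> hom G G" and t0: "\<forall>g\<in>carrier G. b g \<otimes> inv g \<in> gm m"
    and tL: "\<forall>x\<in>gm m. b x \<otimes> inv x \<in> gm (Suc m)"
  shows "\<forall>g\<in>carrier G. (b ^^ p) g \<otimes> inv g \<in> gm (Suc m)"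
proof
  fix g assume g: "g \<in> carrier G"
  define N where "N = gm (Suc m)"
  have N: "N \<lhd> G" unfolding N_def by (rule gm_normal)
  interpret Q: group "G Mod N" by (rule q_group[OF N])
  let ?Q = "G Mod N"
  have qc: "\<And>y. y \<in> carrier G \<Longrightarrow> N #> y \<in> carrier ?Q" by (rule q_carr[OF N])
  have qm: "\<And>a b. a \<in> carrier G \<Longrightarrow> b \<in> carrier G \<Longrightarrow> N #> (a \<otimes> b) = (N #> a) \<otimes>\<^bsub>?Q\<^esub> (N #> b)"
    by (rule q_mult[OF N])
  have bc: "\<And>y. y \<in> carrier G \<Longrightarrow> b y \<in> carrier G" using hom_in_carrier[OF b] by blast
  define d where "d = b g \<otimes> inv g"
  have d1: "d \<in> gm m" unfolding d_def using t0 g by blast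
  have dc: "d \<in> carrier G" by (rule gm_carrier'[OF d1])
  have bg: "b g = d \<otimes> g" unfolding d_def using g bc[OF g] by (simp add: m_assoc)
  have bd: "N #> b d = N #> d" using q_eq_iff[OF N bc[OF dc] dc] tL d1 unfolding N_def by blast
  have it: "N #> (b ^^ j) g = (N #> d) [^]\<^bsub>?Q\<^esub> j \<otimes>\<^bsub>?Q\<^esub> (N #> g)" for j
  proof (induction j)
    case 0 then show ?case using qc[OF g] by simp
  next
    case (Suc j)
    define y where "y = (b ^^ j) g"
    have yc: "y \<in> carrier G" unfolding y_def using hom_in_carrier[OF funpow_hom[OF b] g] .
    have djg: "d [^] j \<otimes> g \<in> carrier G" using dc g by simp
    have "N #> y = N #> (d [^] j \<otimes> g)" using Suc.IH qm[OF _ g, of "d [^] j"] q_pow[OF N dc] dc unfolding y_def by simp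
    then have z1: "y \<otimes> inv (d [^] j \<otimes> g) \<in> N" using q_eq_iff[OF N yc djg] by simp
    define z where "z = y \<otimes> inv (d [^] j \<otimes> g)"
    have zN: "z \<in> N" using z1 unfolding z_def .
    have zc: "z \<in> carrier G" using zN N normal_imp_subgroup subgroup.subset by blast
    have yz: "y = z \<otimes> (d [^] j \<otimes> g)" unfolding z_def using yc djg by (simp add: m_assoc)
    have bzN: "b z \<in> N" unfolding N_def using gm_endo[OF b] zN unfolding N_def by blast
    have "(b ^^ Suc j) g = b y" unfolding y_def by simp
    also have "\<dots> = b z \<otimes> (b d [^] j \<otimes> b g)" using yz zc dc g
      by (simp add: hom_mult[OF b] hom_nat_pow[OF b _ is_group is_group])
    finally have e: "(b ^^ Suc j) g = b z \<otimes> (b d [^] j \<otimes> b g)" .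
    have "N #> (b ^^ Suc j) g = (N #> b z) \<otimes>\<^bsub>?Q\<^esub> ((N #> b d) [^]\<^bsub>?Q\<^esub> j \<otimes>\<^bsub>?Q\<^esub> (N #> b g))"
      unfolding e using bc zc dc g by (simp add: qm q_pow[OF N])
    also have "\<dots> = (N #> d) [^]\<^bsub>?Q\<^esub> j \<otimes>\<^bsub>?Q\<^esub> ((N #> d) \<otimes>\<^bsub>?Q\<^esub> (N #> g))"
      using bd bg q_one_iff[OF N bc[OF zc]] bzN qm[OF dc g] qc dc g by simp
    also have "\<dots> = (N #> d) [^]\<^bsub>?Q\<^esub> Suc j \<otimes>\<^bsub>?Q\<^esub> (N #> g)"
      using qc dc g by (simp add: Q.m_assoc)
    finally show ?case .
  qed
  have "(N #> d) [^]\<^bsub>?Q\<^esub> p = \<one>\<^bsub>?Q\<^esub>"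
    using q_pow[OF N dc, of p] q_one_iff[OF N, of "d [^] p"] gm_pow[OF d1] dc unfolding N_def by simp
  then have "N #> (b ^^ p) g = N #> g" using it[of p] qc g by simp
  then show "(b ^^ p) g \<otimes> inv g \<in> gm (Suc m)"
    using q_eq_iff[OF N hom_in_carrier[OF funpow_hom[OF b] g] g] unfolding N_def by simp
qed

lemma CH:
  assumes a: "a \<in> hom G G" and t1: "\<forall>g\<in>carrier G. a g \<otimes> inv g \<in> gm (Suc 0)"
  shows "\<forall>g\<in>carrier G. (a ^^ (p ^ m)) g \<otimes> inv g \<in> gm (Suc m)"
proof (induction m)
  case 0 then show ?case using t1 by simp
next
  case (Suc m)
  define b where "b = a ^^ (p ^ m)"
  have b: "b \<in> hom G G" unfolding b_def by (rule funpow_hom[OF a])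
  have t0: "\<forall>g\<in>carrier G. b g \<otimes> inv g \<in> gm (Suc m)" using Suc.IH unfolding b_def .
  have "gm (Suc m) \<subseteq> gm (Suc 0)" by (rule gm_mono) simp
  then have tb1: "\<forall>g\<in>carrier G. b g \<otimes> inv g \<in> gm (Suc 0)" using t0 by blast
  have tL: "\<forall>x\<in>gm (Suc m). b x \<otimes> inv x \<in> gm (Suc (Suc m))" by (rule triv_L[OF b tb1])
  have "\<forall>g\<in>carrier G. (b ^^ p) g \<otimes> inv g \<in> gm (Suc (Suc m))" by (rule DL[OF b t0 tL])
  moreover have "b ^^ p = a ^^ (p ^ Suc m)" unfolding b_def by (simp add: funpow_mult mult.commute)
  ultimately show ?case by simp
qed

end

declare lpc_aux.simps(2)[simp del] mult_FactGroup[simp del] one_FactGroup[simp del]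

definition ind :: "('a, 'b) monoid_scheme \<Rightarrow> 'a set \<Rightarrow> 'a set \<Rightarrow> ('a \<Rightarrow> 'a) \<Rightarrow> ('a set \<Rightarrow> 'a set)" where
  "ind G H N \<phi> = restrict (\<lambda>C. \<phi> ` C) (carrier (G\<lparr>carrier := H\<rparr> Mod N))"

lemma R_eq: "carrier (G\<lparr>carrier := H\<rparr> Mod N) = {N #>\<^bsub>G\<^esub> h | h. h \<in> H}"
  by (auto simp: FactGroup_def RCOSETS_def r_coset_def)

context group
begin

lemma auto_inv:
  assumes "\<phi> \<in> auto G"
  shows "\<exists>\<psi>\<in>hom G G. \<forall>x\<in>carrier G. \<phi> (\<psi> x) = x \<and> \<psi> (\<phi> x) = x"
proof -
  have h: "\<phi> \<in> hom G G" and b: "\<phi> \<in> Bij (carrier G)" using assms by (auto simp: auto_def)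
  define \<psi> where "\<psi> = restrict (inv_into (carrier G) \<phi>) (carrier G)"
  have "\<psi> \<in> hom G G" unfolding \<psi>_def by (rule restrict_inv_into_hom[OF h b])
  moreover have "\<forall>x\<in>carrier G. \<phi> (\<psi> x) = x \<and> \<psi> (\<phi> x) = x"
  proof
    fix x assume x: "x \<in> carrier G"
    have bb: "bij_betw \<phi> (carrier G) (carrier G)" using b by (simp add: Bij_def)
    then have "\<phi> (inv_into (carrier G) \<phi> x) = x" using x by (simp add: bij_betw_def f_inv_into_f)
    moreover have "inv_into (carrier G) \<phi> (\<phi> x) = x" using bb x by (simp add: bij_betw_def inv_into_f_f)
    moreover have "\<phi> x \<in> carrier G" using hom_in_carrier[OF h x] .
    ultimately show "\<phi> (\<psi> x) = x \<and> \<psi> (\<phi> x) = x" unfolding \<psi>_def using x by simp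
  qed
  ultimately show ?thesis by blast
qed

lemma auto_img_eq:
  assumes a: "\<phi> \<in> auto G" and inv: "\<And>\<chi>. \<chi> \<in> hom G G \<Longrightarrow> \<chi> ` N \<subseteq> N" and Nc: "N \<subseteq> carrier G"
  shows "\<phi> ` N = N"
proof
  have h: "\<phi> \<in> hom G G" using a by (simp add: auto_def)
  show "\<phi> ` N \<subseteq> N" by (rule inv[OF h])
  obtain \<psi> where \<psi>: "\<psi> \<in> hom G G" "\<forall>x\<in>carrier G. \<phi> (\<psi> x) = x \<and> \<psi> (\<phi> x) = x"
    using auto_inv[OF a] by blast
  show "N \<subseteq> \<phi> ` N"
  proof
    fix x assume x: "x \<in> N"
    then have "\<psi> x \<in> N" using inv[OF \<psi>(1)] by blast
    moreover have "\<phi> (\<psi> x) = x" using \<psi>(2) x Nc by blast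
    ultimately show "x \<in> \<phi> ` N" by force
  qed
qed

lemma img_coset:
  assumes h: "\<phi> \<in> hom G G" and Nc: "N \<subseteq> carrier G" and x: "x \<in> carrier G"
  shows "\<phi> ` (N #> x) = (\<phi> ` N) #> \<phi> x"
proof -
  have "\<phi> ` (N #> x) = (\<lambda>n. \<phi> (n \<otimes> x)) ` N" by (auto simp: r_coset_def)
  also have "\<dots> = (\<lambda>n. \<phi> n \<otimes> \<phi> x) ` N" using hom_mult[OF h] Nc x by (auto intro!: image_cong)
  also have "\<dots> = (\<phi> ` N) #> \<phi> x" by (auto simp: r_coset_def)
  finally show ?thesis .
qed

end

locale indsetup = group G for G (structure) +
  fixes H N
  assumes H: "subgroup H G" and N: "N \<lhd> G" and NH: "N \<subseteq> H"
    and Hi: "\<And>\<phi>. \<phi> \<in> hom G G \<Longrightarrow> \<phi> ` H \<subseteq> H"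
    and Ni: "\<And>\<phi>. \<phi> \<in> hom G G \<Longrightarrow> \<phi> ` N \<subseteq> N"
begin

abbreviation R where "R \<equiv> carrier (G\<lparr>carrier := H\<rparr> Mod N)"

lemma Nc: "N \<subseteq> carrier G" using N normal_imp_subgroup subgroup.subset by blast
lemma Hc: "H \<subseteq> carrier G" using H subgroup.subset by blast

lemma R_mem: "C \<in> R \<longleftrightarrow> (\<exists>h\<in>H. C = N #> h)"
  using R_eq[where G=G and H=H and N=N] by auto

lemma ind_coset:
  assumes a: "\<phi> \<in> auto G" and h: "h \<in> H"
  shows "ind G H N \<phi> (N #> h) = N #> \<phi> h"
proof -
  have hom: "\<phi> \<in> hom G G" using a by (simp add: auto_def)
  have "N #> h \<in> R" using R_mem h by blast
  then have "ind G H N \<phi> (N #> h) = \<phi> ` (N #> h)" by (simp add: ind_def)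
  also have "\<dots> = (\<phi> ` N) #> \<phi> h" by (rule img_coset[OF hom Nc]) (use h Hc in blast)
  also have "\<phi> ` N = N" by (rule auto_img_eq[OF a Ni Nc])
  finally show ?thesis .
qed

lemma ind_Bij:
  assumes a: "\<phi> \<in> auto G"
  shows "ind G H N \<phi> \<in> Bij R"
proof -
  have hom: "\<phi> \<in> hom G G" using a by (simp add: auto_def)
  obtain \<psi> where \<psi>: "\<psi> \<in> hom G G" "\<forall>x\<in>carrier G. \<phi> (\<psi> x) = x \<and> \<psi> (\<phi> x) = x"
    using auto_inv[OF a] by blast
  define f' where "f' = restrict (\<lambda>C. \<psi> ` C) R"
  have CR: "\<And>C. C \<in> R \<Longrightarrow> C \<subseteq> carrier G" using R_mem Nc Hc by (auto simp: r_coset_def)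
  have f1: "\<And>C. C \<in> R \<Longrightarrow> ind G H N \<phi> C \<in> R"
  proof -
    fix C assume "C \<in> R"
    then obtain h where h: "h \<in> H" "C = N #> h" using R_mem by blast
    have "\<phi> h \<in> H" using Hi[OF hom] h by blast
    then show "ind G H N \<phi> C \<in> R" using ind_coset[OF a h(1)] h R_mem by auto
  qed
  have pp: "\<And>C. C \<in> R \<Longrightarrow> \<psi> ` (\<phi> ` C) = C"
  proof -
    fix C assume C: "C \<in> R"
    have "\<psi> ` (\<phi> ` C) = (\<lambda>x. \<psi> (\<phi> x)) ` C" by auto
    also have "\<dots> = C" using \<psi>(2) CR[OF C] by (auto intro: image_cong) (metis image_eqI subsetD)
    finally show "\<psi> ` (\<phi> ` C) = C" .
  qed
  have qq: "\<And>C. C \<in> R \<Longrightarrow> \<phi> ` (\<psi> ` C) = C"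
  proof -
    fix C assume C: "C \<in> R"
    have "\<phi> ` (\<psi> ` C) = (\<lambda>x. \<phi> (\<psi> x)) ` C" by auto
    also have "\<dots> = C" using \<psi>(2) CR[OF C] by (auto intro: image_cong) (metis image_eqI subsetD)
    finally show "\<phi> ` (\<psi> ` C) = C" .
  qed
  have f2: "\<And>C. C \<in> R \<Longrightarrow> f' C \<in> R"
  proof -
    fix C assume C: "C \<in> R"
    then obtain h where h: "h \<in> H" "C = N #> h" using R_mem by blast
    have hc: "h \<in> carrier G" using h Hc by blast
    have "\<psi> h \<in> H" using Hi[OF \<psi>(1)] h by blast
    then have C': "N #> \<psi> h \<in> R" using R_mem by blast
    have "\<phi> ` (N #> \<psi> h) = N #> h" using ind_coset[OF a \<open>\<psi> h \<in> H\<close>] C' \<psi>(2) hc by (simp add: ind_def)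
    then have "\<psi> ` C = N #> \<psi> h" using pp[OF C'] h by simp
    then show "f' C \<in> R" using C C' by (simp add: f'_def)
  qed
  have "bij_betw (ind G H N \<phi>) R R"
  proof (rule bij_betw_byWitness[where f'=f'])
    show "\<forall>C\<in>R. f' (ind G H N \<phi> C) = C" using pp f1 by (simp add: ind_def f'_def)
    show "\<forall>C\<in>R. ind G H N \<phi> (f' C) = C" using qq f2 by (simp add: ind_def f'_def)
    show "ind G H N \<phi> ` R \<subseteq> R" using f1 by blast
    show "f' ` R \<subseteq> R" using f2 by blast
  qed
  then show ?thesis by (simp add: Bij_def ind_def)
qed

lemma ind_hom: "ind G H N \<in> hom (AutoGroup G) (BijGroup R)"
proof (rule homI)
  fix \<phi> assume "\<phi> \<in> carrier (AutoGroup G)"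
  then show "ind G H N \<phi> \<in> carrier (BijGroup R)" using ind_Bij by (simp add: AutoGroup_def BijGroup_def)
next
  fix \<phi> \<chi> assume a: "\<phi> \<in> carrier (AutoGroup G)" and b: "\<chi> \<in> carrier (AutoGroup G)"
  then have a': "\<phi> \<in> auto G" and b': "\<chi> \<in> auto G" by (auto simp: AutoGroup_def)
  then have aB: "\<phi> \<in> Bij (carrier G)" and bB: "\<chi> \<in> Bij (carrier G)" by (auto simp: auto_def)
  have bh: "\<chi> \<in> hom G G" using b' by (simp add: auto_def)
  have m1: "\<phi> \<otimes>\<^bsub>AutoGroup G\<^esub> \<chi> = compose (carrier G) \<phi> \<chi>"
    using aB bB by (simp add: AutoGroup_def BijGroup_def)
  have m2: "ind G H N \<phi> \<otimes>\<^bsub>BijGroup R\<^esub> ind G H N \<chi> = compose R (ind G H N \<phi>) (ind G H N \<chi>)"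
    using ind_Bij[OF a'] ind_Bij[OF b'] by (simp add: BijGroup_def)
  have CR: "\<And>C. C \<in> R \<Longrightarrow> C \<subseteq> carrier G" using R_mem Nc Hc by (auto simp: r_coset_def)
  have f1: "\<And>C. C \<in> R \<Longrightarrow> ind G H N \<chi> C \<in> R"
    using ind_Bij[OF b'] by (auto simp: Bij_def bij_betw_def)
  show "ind G H N (\<phi> \<otimes>\<^bsub>AutoGroup G\<^esub> \<chi>) = ind G H N \<phi> \<otimes>\<^bsub>BijGroup R\<^esub> ind G H N \<chi>"
    unfolding m1 m2
  proof (rule ext)
    fix C
    show "ind G H N (compose (carrier G) \<phi> \<chi>) C = compose R (ind G H N \<phi>) (ind G H N \<chi>) C"
    proof (cases "C \<in> R")
      case True
      have "compose (carrier G) \<phi> \<chi> ` C = \<phi> ` (\<chi> ` C)" using CR[OF True] by (auto simp: compose_def)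
      moreover have "ind G H N \<chi> C = \<chi> ` C" using True by (simp add: ind_def)
      ultimately show ?thesis using True f1[OF True] by (simp add: ind_def compose_def)
    next
      case False then show ?thesis by (simp add: ind_def compose_def)
    qed
  qed
qed

lemma ind_one_iff:
  assumes a: "\<phi> \<in> auto G"
  shows "ind G H N \<phi> = \<one>\<^bsub>BijGroup R\<^esub> \<longleftrightarrow> (\<forall>x\<in>H. \<phi> x \<otimes> inv x \<in> N)"
proof -
  have hom: "\<phi> \<in> hom G G" using a by (simp add: auto_def)
  have "ind G H N \<phi> = \<one>\<^bsub>BijGroup R\<^esub> \<longleftrightarrow> (\<forall>C\<in>R. ind G H N \<phi> C = C)"
    by (auto simp: BijGroup_def ind_def restrict_def fun_eq_iff)
  also have "\<dots> \<longleftrightarrow> (\<forall>h\<in>H. N #> \<phi> h = N #> h)"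
  proof
    assume L: "\<forall>C\<in>R. ind G H N \<phi> C = C"
    show "\<forall>h\<in>H. N #> \<phi> h = N #> h"
    proof
      fix h assume h: "h \<in> H"
      then have "N #> h \<in> R" using R_mem by blast
      then show "N #> \<phi> h = N #> h" using L ind_coset[OF a h] by simp
    qed
  next
    assume L: "\<forall>h\<in>H. N #> \<phi> h = N #> h"
    show "\<forall>C\<in>R. ind G H N \<phi> C = C"
    proof
      fix C assume "C \<in> R"
      then obtain h where h: "h \<in> H" "C = N #> h" using R_mem by blast
      then show "ind G H N \<phi> C = C" using L ind_coset[OF a h(1)] by simp
    qed
  qed
  also have "\<dots> \<longleftrightarrow> (\<forall>x\<in>H. \<phi> x \<otimes> inv x \<in> N)"
    using q_eq_iff[OF N] Hc hom_in_carrier[OF hom] by blast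
  finally show ?thesis .
qed

end

lemma all_prime_factors_p:
  fixes n p :: nat
  assumes p: "Factorial_Ring.prime p" and n: "n > 0" and q: "\<And>q. Factorial_Ring.prime q \<Longrightarrow> q dvd n \<Longrightarrow> q = p"
  shows "\<exists>j. n = p ^ j"
proof -
  have pu: "\<not> is_unit p" using p Factorial_Ring.not_prime_unit by blast
  obtain y where y: "n = p ^ multiplicity p n * y" "\<not> p dvd y"
    using multiplicity_decompose'[of n p] n pu by auto
  have "y = 1"
  proof (rule ccontr)
    assume "y \<noteq> 1"
    then obtain r where r: "Factorial_Ring.prime r" "r dvd y" using prime_factor_nat by blast
    have "r dvd n" using dvd_mult[OF r(2), of "p ^ multiplicity p n"] y(1) by simp
    then have "r = p" using q r(1) by blast
    then show False using r y(2) by simp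
  qed
  then show ?thesis using y(1) by auto
qed

lemma (in group) p_group_of_exp:
  assumes p: "Factorial_Ring.prime p" and fin: "finite (carrier G)"
    and ex: "\<And>x. x \<in> carrier G \<Longrightarrow> x [^] (p ^ e) = \<one>"
  shows "\<exists>j. card (carrier G) = p ^ j"
proof (rule all_prime_factors_p[OF p])
  show "card (carrier G) > 0" using fin one_closed by (auto simp: card_gt_0_iff)
  fix q :: nat assume q: "Factorial_Ring.prime q" "q dvd card (carrier G)"
  then obtain m where m: "order G = q ^ 1 * m" by (auto simp: order_def)
  obtain Hs where Hs: "subgroup Hs G" "card Hs = q ^ 1" using sylow_thm[OF q(1) is_group m fin] by blast
  have "card Hs > 1" using Hs(2) q(1) prime_gt_1_nat by simp
  then obtain x where x: "x \<in> Hs" "x \<noteq> \<one>"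
  proof -
    assume r: "\<And>x. x \<in> Hs \<Longrightarrow> x \<noteq> \<one> \<Longrightarrow> thesis"
    show thesis
    proof (rule ccontr)
      assume "\<not> thesis"
      then have "Hs \<subseteq> {\<one>}" using r by blast
      then have "card Hs \<le> card {\<one>}" by (rule card_mono[rotated]) simp
      then have "card Hs \<le> 1" by simp
      then show False using \<open>card Hs > 1\<close> by simp
    qed
  qed
  have xc: "x \<in> carrier G" using x Hs(1) subgroup.subset by blast
  interpret Hg: group "G\<lparr>carrier := Hs\<rparr>" by (rule subgroup_imp_group[OF Hs(1)])
  have "x [^]\<^bsub>G\<lparr>carrier := Hs\<rparr>\<^esub> order (G\<lparr>carrier := Hs\<rparr>) = \<one>\<^bsub>G\<lparr>carrier := Hs\<rparr>\<^esub>"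
    by (rule Hg.pow_order_eq_1) (simp add: x)
  then have xq: "x [^] q = \<one>" using Hs(2) by (simp add: order_def nat_pow_consistent[symmetric])
  have oq: "ord x dvd q" using pow_eq_id[OF xc] xq by simp
  have "ord x \<noteq> 1" using ord_eq_1[OF xc] x(2) by simp
  then have "ord x = q" using oq q(1) by (meson prime_nat_iff)
  moreover have "ord x dvd p ^ e" using pow_eq_id[OF xc] ex[OF xc] by simp
  ultimately have "q dvd p ^ e" by simp
  then have "q dvd p" using q(1) prime_dvd_power by blast
  then show "q = p" using p q(1) by (simp add: primes_dvd_imp_eq)
qed


declare lpc_aux.simps(2)[simp del] mult_FactGroup[simp del] one_FactGroup[simp del]

context group
begin

lemma pow_mod_p: "t \<in> carrier G \<Longrightarrow> t [^] (p::nat) = \<one> \<Longrightarrow> t [^] (n mod p) = t [^] n"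
proof -
  assume t: "t \<in> carrier G" and tp: "t [^] p = \<one>"
  have "t [^] n = t [^] (p * (n div p) + n mod p)" by simp
  also have "\<dots> = (t [^] p) [^] (n div p) \<otimes> t [^] (n mod p)" using t by (simp add: nat_pow_mult nat_pow_pow)
  also have "\<dots> = t [^] (n mod p)" using tp t by simp
  finally show ?thesis by simp
qed

lemma centralizer_sub: "t \<in> carrier G \<Longrightarrow> subgroup {y \<in> carrier G. t \<otimes> y = y \<otimes> t} G"
proof (rule subgroupI)
  assume t: "t \<in> carrier G"
  show "{y \<in> carrier G. t \<otimes> y = y \<otimes> t} \<subseteq> carrier G" by blast
  show "{y \<in> carrier G. t \<otimes> y = y \<otimes> t} \<noteq> {}" using t by (auto intro!: exI[of _ \<one>])
  fix a assume "a \<in> {y \<in> carrier G. t \<otimes> y = y \<otimes> t}"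
  then show "inv a \<in> {y \<in> carrier G. t \<otimes> y = y \<otimes> t}" using cmt_inv[OF t] by simp
  fix b assume "b \<in> {y \<in> carrier G. t \<otimes> y = y \<otimes> t}"
  then show "a \<otimes> b \<in> {y \<in> carrier G. t \<otimes> y = y \<otimes> t}" using cmt_mult[OF t] \<open>a \<in> _\<close> by simp
qed

lemma fin_gen_abelian:
  assumes p: "p > 0" and fin: "finite T"
  shows "T \<subseteq> carrier G \<Longrightarrow> (\<forall>a\<in>T. \<forall>b\<in>T. a \<otimes> b = b \<otimes> a) \<Longrightarrow> (\<forall>t\<in>T. t [^] (p::nat) = \<one>) \<Longrightarrow> finite (generate G T)"
  using fin
proof (induction T rule: finite_induct)
  case empty then show ?case using generate_empty by simp
next
  case (insert t T)
  have tc: "t \<in> carrier G" and Tc: "T \<subseteq> carrier G" using insert.prems by auto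
  have tp: "t [^] p = \<one>" using insert.prems by auto
  have fT: "finite (generate G T)" using insert.IH insert.prems by auto
  have gTc: "generate G T \<subseteq> carrier G" by (rule generate_incl[OF Tc])
  have ctr: "generate G T \<subseteq> {y \<in> carrier G. t \<otimes> y = y \<otimes> t}"
    by (rule generate_subgroup_incl[OF _ centralizer_sub[OF tc]]) (use insert.prems in auto)
  define M where "M = (\<lambda>(i, y). t [^] i \<otimes> y) ` ({..<p} \<times> generate G T)"
  have memM: "\<And>n y. y \<in> generate G T \<Longrightarrow> t [^] (n::nat) \<otimes> y \<in> M"
  proof -
    fix n :: nat and y assume y: "y \<in> generate G T"
    have "t [^] n \<otimes> y = (\<lambda>(i, y). t [^] i \<otimes> y) (n mod p, y)" using pow_mod_p[OF tc tp] by simp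
    moreover have "(n mod p, y) \<in> {..<p} \<times> generate G T" using p y by simp
    ultimately show "t [^] n \<otimes> y \<in> M" unfolding M_def by (metis image_eqI)
  qed
  have Mc: "M \<subseteq> carrier G" unfolding M_def using gTc tc by auto
  have subM: "subgroup M G"
  proof (rule subgroupI[OF Mc])
    show "M \<noteq> {}" using memM[OF generate.one] by blast
    fix a assume "a \<in> M"
    then obtain i y where a: "y \<in> generate G T" "a = t [^] (i::nat) \<otimes> y" unfolding M_def by auto
    have yc: "y \<in> carrier G" using a gTc by blast
    have ty: "t \<otimes> y = y \<otimes> t" using ctr a by blast
    have tiy: "inv y \<otimes> t [^] n = t [^] n \<otimes> inv y" for n :: nat
      using pow_comm[OF tc inv_closed[OF yc], of n] cmt_inv[OF tc yc ty] by simp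
    have "inv a = inv y \<otimes> inv (t [^] i)" using a yc tc by (simp add: inv_mult_group)
    also have "inv (t [^] i) = t [^] (p * i - i)"
    proof -
      have "t [^] (p * i - i) \<otimes> t [^] i = t [^] (p * i)" using tc p
        by (simp add: nat_pow_mult)
      also have "\<dots> = \<one>" using tc tp by (simp add: nat_pow_pow[symmetric])
      finally show ?thesis using tc by (metis inv_equality nat_pow_closed)
    qed
    also have "inv y \<otimes> t [^] (p * i - i) = t [^] (p * i - i) \<otimes> inv y" by (rule tiy)
    finally have "inv a = t [^] (p * i - i) \<otimes> inv y" .
    moreover have "inv y \<in> generate G T" using generate_m_inv_closed[OF Tc a(1)] .
    ultimately show "inv a \<in> M" using memM by simp
    fix b assume "b \<in> M"
    then obtain j z where b: "z \<in> generate G T" "b = t [^] (j::nat) \<otimes> z" unfolding M_def by auto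
    have zc: "z \<in> carrier G" using b gTc by blast
    have tyj: "y \<otimes> t [^] j = t [^] j \<otimes> y" using pow_comm[OF tc yc ty, of j] by simp
    have "a \<otimes> b = t [^] i \<otimes> (y \<otimes> t [^] j) \<otimes> z" using a b yc zc tc by (simp add: m_assoc)
    also have "\<dots> = t [^] (i + j) \<otimes> (y \<otimes> z)" using tyj yc zc tc by (simp add: m_assoc nat_pow_mult[symmetric])
    finally show "a \<otimes> b \<in> M" using memM generate.eng[OF a(1) b(1)] by simp
  qed
  have "insert t T \<subseteq> M"
  proof
    fix x assume "x \<in> insert t T"
    then show "x \<in> M"
    proof
      assume "x = t" then show "x \<in> M" using memM[OF generate.one, of 1] tc by simp
    next
      assume "x \<in> T" then show "x \<in> M" using memM[OF generate.incl[of x T G], of 0] Tc by auto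
    qed
  qed
  then have "generate G (insert t T) \<subseteq> M" by (rule generate_subgroup_incl[OF _ subM])
  moreover have "finite M" unfolding M_def using fT by simp
  ultimately show ?case using finite_subset by blast
qed

end

declare lpc_aux.simps(2)[simp del] mult_FactGroup[simp del] one_FactGroup[simp del]

context group
begin

lemma preimage_q_sub:
  assumes N: "N \<lhd> G" and Y: "subgroup Y (G Mod N)"
  shows "subgroup {y \<in> carrier G. N #> y \<in> Y} G"
proof (rule subgroupI)
  show "{y \<in> carrier G. N #> y \<in> Y} \<subseteq> carrier G" by blast
  have "N #> \<one> = \<one>\<^bsub>G Mod N\<^esub>" using q_one_iff[OF N] subgroup.one_closed[OF normal_imp_subgroup[OF N]] by simp
  then have "\<one> \<in> {y \<in> carrier G. N #> y \<in> Y}" using subgroup.one_closed[OF Y] by simp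
  then show "{y \<in> carrier G. N #> y \<in> Y} \<noteq> {}" by blast
  fix a assume a: "a \<in> {y \<in> carrier G. N #> y \<in> Y}"
  then show "inv a \<in> {y \<in> carrier G. N #> y \<in> Y}" using q_inv[OF N] subgroup.m_inv_closed[OF Y] by simp
  fix b assume b: "b \<in> {y \<in> carrier G. N #> y \<in> Y}"
  then show "a \<otimes> b \<in> {y \<in> carrier G. N #> y \<in> Y}" using a q_mult[OF N] subgroup.m_closed[OF Y] by simp
qed

lemma cm_mult_id: "g1 \<in> carrier G \<Longrightarrow> g2 \<in> carrier G \<Longrightarrow> x \<in> carrier G \<Longrightarrow>
  (g1 \<otimes> g2) \<otimes> x \<otimes> inv (g1 \<otimes> g2) \<otimes> inv x = g1 \<otimes> (g2 \<otimes> x \<otimes> inv g2 \<otimes> inv x) \<otimes> x \<otimes> inv g1 \<otimes> inv x"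
  by (simp add: m_assoc inv_mult_group)

lemma cm_inv_id: "g \<in> carrier G \<Longrightarrow> x \<in> carrier G \<Longrightarrow>
  inv g \<otimes> x \<otimes> inv (inv g) \<otimes> inv x = inv (g \<otimes> (inv g \<otimes> x \<otimes> g) \<otimes> inv g \<otimes> inv (inv g \<otimes> x \<otimes> g))"
  by (simp add: m_assoc inv_mult_group)

lemma shift_c: "a \<in> carrier G \<Longrightarrow> c \<in> carrier G \<Longrightarrow> x \<in> carrier G \<Longrightarrow> a \<otimes> c = c \<otimes> a \<Longrightarrow>
  a \<otimes> c \<otimes> x \<otimes> inv a \<otimes> inv x = c \<otimes> (a \<otimes> x \<otimes> inv a \<otimes> inv x)"
  by (simp add: m_assoc)

end

locale lpcfg = lpc +
  fixes S
  assumes S_fin: "finite S" and S_sub: "S \<subseteq> carrier G" and S_gen: "generate G S = carrier G"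
    and p_pos: "p > 0"
begin

definition Lset :: "nat \<Rightarrow> 'a set set" where "Lset k = {gm (Suc k) #> h | h. h \<in> gm k}"

lemma pow_shift_q:
  assumes z: "z \<in> gm (Suc k)" and x: "x \<in> carrier G"
  shows "gm (Suc (Suc k)) #> ((z \<otimes> x) [^] p) = gm (Suc (Suc k)) #> (x [^] p)"
proof -
  define N where "N = gm (Suc (Suc k))"
  have N: "N \<lhd> G" unfolding N_def by (rule gm_normal)
  interpret Q: group "G Mod N" by (rule q_group[OF N])
  let ?Q = "G Mod N"
  have zc: "z \<in> carrier G" by (rule gm_carrier'[OF z])
  have zx: "(N #> z) \<otimes>\<^bsub>?Q\<^esub> (N #> x) = (N #> x) \<otimes>\<^bsub>?Q\<^esub> (N #> z)" unfolding N_def by (rule central[OF z x])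
  have zp: "z [^] p \<in> N" unfolding N_def by (rule gm_pow[OF z])
  have "N #> ((z \<otimes> x) [^] p) = ((N #> z) \<otimes>\<^bsub>?Q\<^esub> (N #> x)) [^]\<^bsub>?Q\<^esub> p"
    using q_pow[OF N] q_mult[OF N zc x] zc x by simp
  also have "\<dots> = (N #> z) [^]\<^bsub>?Q\<^esub> p \<otimes>\<^bsub>?Q\<^esub> (N #> x) [^]\<^bsub>?Q\<^esub> p"
    by (rule Q.pow_mult_distrib[OF zx q_carr[OF N zc] q_carr[OF N x]])
  also have "(N #> z) [^]\<^bsub>?Q\<^esub> p = \<one>\<^bsub>?Q\<^esub>"
    using q_pow[OF N zc, of p] q_one_iff[OF N, of "z [^] p"] zp zc by simp
  also have "\<one>\<^bsub>?Q\<^esub> \<otimes>\<^bsub>?Q\<^esub> (N #> x) [^]\<^bsub>?Q\<^esub> p = N #> (x [^] p)"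
    using q_pow[OF N x] q_carr[OF N x] by simp
  finally show ?thesis unfolding N_def .
qed

lemma cm_shift_q:
  assumes z: "z \<in> gm (Suc k)" and x: "x \<in> carrier G" and s: "s \<in> carrier G"
  shows "gm (Suc (Suc k)) #> cm s (z \<otimes> x) = gm (Suc (Suc k)) #> cm s x"
proof -
  define N where "N = gm (Suc (Suc k))"
  have N: "N \<lhd> G" unfolding N_def by (rule gm_normal)
  interpret Q: group "G Mod N" by (rule q_group[OF N])
  let ?Q = "G Mod N"
  have zc: "z \<in> carrier G" by (rule gm_carrier'[OF z])
  have qm: "\<And>a b. a \<in> carrier G \<Longrightarrow> b \<in> carrier G \<Longrightarrow> N #> (a \<otimes> b) = (N #> a) \<otimes>\<^bsub>?Q\<^esub> (N #> b)"
    by (rule q_mult[OF N])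
  have qi: "\<And>a. a \<in> carrier G \<Longrightarrow> N #> (inv a) = inv\<^bsub>?Q\<^esub> (N #> a)"
    by (rule q_inv[OF N])
  have qc: "\<And>y. y \<in> carrier G \<Longrightarrow> N #> y \<in> carrier ?Q" by (rule q_carr[OF N])
  have zs: "(N #> z) \<otimes>\<^bsub>?Q\<^esub> (N #> s) = (N #> s) \<otimes>\<^bsub>?Q\<^esub> (N #> z)" unfolding N_def by (rule central[OF z s])
  have zx: "(N #> z) \<otimes>\<^bsub>?Q\<^esub> (N #> x) = (N #> x) \<otimes>\<^bsub>?Q\<^esub> (N #> z)" unfolding N_def by (rule central[OF z x])
  have "N #> cm s (z \<otimes> x) = (N #> s) \<otimes>\<^bsub>?Q\<^esub> ((N #> z) \<otimes>\<^bsub>?Q\<^esub> (N #> x))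
        \<otimes>\<^bsub>?Q\<^esub> inv\<^bsub>?Q\<^esub> (N #> s) \<otimes>\<^bsub>?Q\<^esub> inv\<^bsub>?Q\<^esub> ((N #> z) \<otimes>\<^bsub>?Q\<^esub> (N #> x))"
    unfolding cm_def using s zc x by (simp only: qm qi m_closed inv_closed)
  also have "\<dots> = (\<one>\<^bsub>?Q\<^esub> \<otimes>\<^bsub>?Q\<^esub> (N #> s)) \<otimes>\<^bsub>?Q\<^esub> ((N #> z) \<otimes>\<^bsub>?Q\<^esub> (N #> x))
        \<otimes>\<^bsub>?Q\<^esub> inv\<^bsub>?Q\<^esub> (\<one>\<^bsub>?Q\<^esub> \<otimes>\<^bsub>?Q\<^esub> (N #> s)) \<otimes>\<^bsub>?Q\<^esub> inv\<^bsub>?Q\<^esub> ((N #> z) \<otimes>\<^bsub>?Q\<^esub> (N #> x))"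
    using qc[OF s] by simp
  also have "\<dots> = (N #> s) \<otimes>\<^bsub>?Q\<^esub> (N #> x) \<otimes>\<^bsub>?Q\<^esub> inv\<^bsub>?Q\<^esub> (N #> s) \<otimes>\<^bsub>?Q\<^esub> inv\<^bsub>?Q\<^esub> (N #> x)"
    by (rule Q.ga7[OF Q.one_closed qc[OF s] qc[OF zc] qc[OF x] _ zs zx]) (use qc s zc x in simp_all)
  also have "\<dots> = N #> cm s x" unfolding cm_def using s x by (simp only: qm qi m_closed inv_closed)
  finally show ?thesis unfolding N_def .
qed

lemma coset_rep:
  assumes x: "x \<in> gm k"
  shows "(SOME y. y \<in> gm (Suc k) #> x) \<in> gm (Suc k) #> x"
    and "\<exists>z\<in>gm (Suc k). (SOME y. y \<in> gm (Suc k) #> x) = z \<otimes> x"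
proof -
  have "x \<in> gm (Suc k) #> x" using rcos_self[OF gm_carrier'[OF x] gm_sub] .
  then show 1: "(SOME y. y \<in> gm (Suc k) #> x) \<in> gm (Suc k) #> x" by (rule someI)
  then show "\<exists>z\<in>gm (Suc k). (SOME y. y \<in> gm (Suc k) #> x) = z \<otimes> x" by (auto simp: r_coset_def)
qed

lemma fin_L: "finite (Lset k)"
proof (induction k)
  case 0
  define N where "N = gm (Suc 0)"
  have N: "N \<lhd> G" unfolding N_def by (rule gm_normal)
  interpret Q: group "G Mod N" by (rule q_group[OF N])
  let ?Q = "G Mod N"
  have gh: "group_hom G ?Q (\<lambda>x. N #> x)"
    using q_hom[OF N] by (simp add: group_hom_def group_hom_axioms_def is_group Q.is_group)
  define T where "T = (\<lambda>s. N #> s) ` S"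
  have TQ: "T \<subseteq> carrier ?Q" unfolding T_def using S_sub q_carr[OF N] by blast
  have "Lset 0 = (\<lambda>x. N #> x) ` carrier G" unfolding Lset_def N_def by auto
  also have "\<dots> = (\<lambda>x. N #> x) ` generate G S" using S_gen by simp
  also have "\<dots> = generate ?Q T" unfolding T_def using group_hom.generate_img[OF gh S_sub] by simp
  finally have L: "Lset 0 = generate ?Q T" .
  have "finite (generate ?Q T)"
  proof (rule Q.fin_gen_abelian[OF p_pos _ TQ])
    show "finite T" unfolding T_def using S_fin by simp
    show "\<forall>a\<in>T. \<forall>b\<in>T. a \<otimes>\<^bsub>?Q\<^esub> b = b \<otimes>\<^bsub>?Q\<^esub> a"
    proof (intro ballI)
      fix a b assume "a \<in> T" "b \<in> T"
      then obtain s t where st: "s \<in> S" "t \<in> S" "a = N #> s" "b = N #> t" unfolding T_def by blast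
      have sc: "s \<in> carrier G" and tc: "t \<in> carrier G" using st S_sub by auto
      have "cm s t \<in> N" unfolding N_def using gm_cm[OF sc, of t 0] tc by simp
      then show "a \<otimes>\<^bsub>?Q\<^esub> b = b \<otimes>\<^bsub>?Q\<^esub> a" using cm_in_iff[OF N sc tc] st by simp
    qed
    show "\<forall>t\<in>T. t [^]\<^bsub>?Q\<^esub> p = \<one>\<^bsub>?Q\<^esub>"
    proof
      fix a assume "a \<in> T"
      then obtain s where s: "s \<in> S" "a = N #> s" unfolding T_def by blast
      have sc: "s \<in> carrier G" using s S_sub by auto
      have "s [^] p \<in> N" unfolding N_def using gm_pow[of s 0] sc by simp
      then have "N #> (s [^] p) = \<one>\<^bsub>?Q\<^esub>" using q_one_iff[OF N, of "s [^] p"] sc by simp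
      then show "a [^]\<^bsub>?Q\<^esub> p = \<one>\<^bsub>?Q\<^esub>" using q_pow[OF N sc] s by simp
    qed
  qed
  then show ?case using L by simp
next
  case (Suc k)
  define N where "N = gm (Suc (Suc k))"
  have N: "N \<lhd> G" unfolding N_def by (rule gm_normal)
  interpret Q: group "G Mod N" by (rule q_group[OF N])
  let ?Q = "G Mod N"
  have qc: "\<And>y. y \<in> carrier G \<Longrightarrow> N #> y \<in> carrier ?Q" by (rule q_carr[OF N])
  have qm: "\<And>a b. a \<in> carrier G \<Longrightarrow> b \<in> carrier G \<Longrightarrow> N #> (a \<otimes> b) = (N #> a) \<otimes>\<^bsub>?Q\<^esub> (N #> b)"
    by (rule q_mult[OF N])
  have qi: "\<And>a. a \<in> carrier G \<Longrightarrow> N #> (inv a) = inv\<^bsub>?Q\<^esub> (N #> a)"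
    by (rule q_inv[OF N])
  define T1 where "T1 = {N #> (x [^] p) | x. x \<in> gm k}"
  define T2 where "T2 = {N #> cm s x | s x. s \<in> S \<and> x \<in> gm k}"
  define T where "T = T1 \<union> T2"
  define f1 where "f1 = (\<lambda>C. N #> ((SOME y. y \<in> C) [^] p))"
  define f2 where "f2 = (\<lambda>(s, C). N #> cm s (SOME y. y \<in> C))"
  have T1f: "T1 \<subseteq> f1 ` Lset k"
  proof
    fix a assume "a \<in> T1"
    then obtain x where x: "x \<in> gm k" "a = N #> (x [^] p)" unfolding T1_def by blast
    obtain z where z: "z \<in> gm (Suc k)" "(SOME y. y \<in> gm (Suc k) #> x) = z \<otimes> x" using coset_rep(2)[OF x(1)] by blast
    have "f1 (gm (Suc k) #> x) = N #> ((z \<otimes> x) [^] p)" unfolding f1_def using z(2) by simp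
    also have "\<dots> = a" unfolding N_def using pow_shift_q[OF z(1) gm_carrier'[OF x(1)]] x(2) N_def by simp
    finally have "a = f1 (gm (Suc k) #> x)" by simp
    moreover have "gm (Suc k) #> x \<in> Lset k" unfolding Lset_def using x(1) by blast
    ultimately show "a \<in> f1 ` Lset k" by blast
  qed
  have T2f: "T2 \<subseteq> f2 ` (S \<times> Lset k)"
  proof
    fix a assume "a \<in> T2"
    then obtain s x where x: "s \<in> S" "x \<in> gm k" "a = N #> cm s x" unfolding T2_def by blast
    have sc: "s \<in> carrier G" using x(1) S_sub by blast
    obtain z where z: "z \<in> gm (Suc k)" "(SOME y. y \<in> gm (Suc k) #> x) = z \<otimes> x" using coset_rep(2)[OF x(2)] by blast
    have "f2 (s, gm (Suc k) #> x) = N #> cm s (z \<otimes> x)" unfolding f2_def using z(2) by simp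
    also have "\<dots> = a" unfolding N_def using cm_shift_q[OF z(1) gm_carrier'[OF x(2)] sc] x(3) N_def by simp
    finally have "a = f2 (s, gm (Suc k) #> x)" by simp
    moreover have "(s, gm (Suc k) #> x) \<in> S \<times> Lset k" unfolding Lset_def using x(1,2) by blast
    ultimately show "a \<in> f2 ` (S \<times> Lset k)" by blast
  qed
  have finT: "finite T" unfolding T_def
    using finite_subset[OF T1f] finite_subset[OF T2f] Suc.IH S_fin by auto
  have Tin: "\<And>a. a \<in> T \<Longrightarrow> \<exists>y\<in>gm (Suc k). a = N #> y"
    unfolding T_def T1_def T2_def using gm_pow gm_cm S_sub by blast
  have TQ: "T \<subseteq> carrier ?Q" using Tin qc gm_carrier' by blast
  have finY: "finite (generate ?Q T)"
  proof (rule Q.fin_gen_abelian[OF p_pos finT TQ])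
    show "\<forall>a\<in>T. \<forall>b\<in>T. a \<otimes>\<^bsub>?Q\<^esub> b = b \<otimes>\<^bsub>?Q\<^esub> a"
    proof (intro ballI)
      fix a b assume "a \<in> T" "b \<in> T"
      then obtain y1 y2 where y: "y1 \<in> gm (Suc k)" "y2 \<in> gm (Suc k)" "a = N #> y1" "b = N #> y2" using Tin by metis
      show "a \<otimes>\<^bsub>?Q\<^esub> b = b \<otimes>\<^bsub>?Q\<^esub> a" using central[OF y(1) gm_carrier'[OF y(2)]] y(3,4) unfolding N_def by simp
    qed
    show "\<forall>t\<in>T. t [^]\<^bsub>?Q\<^esub> p = \<one>\<^bsub>?Q\<^esub>"
    proof
      fix a assume "a \<in> T"
      then obtain y where y: "y \<in> gm (Suc k)" "a = N #> y" using Tin by blast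
      have yc: "y \<in> carrier G" by (rule gm_carrier'[OF y(1)])
      have "y [^] p \<in> N" unfolding N_def by (rule gm_pow[OF y(1)])
      then have "N #> (y [^] p) = \<one>\<^bsub>?Q\<^esub>" using q_one_iff[OF N, of "y [^] p"] yc by simp
      then show "a [^]\<^bsub>?Q\<^esub> p = \<one>\<^bsub>?Q\<^esub>" using q_pow[OF N yc] y by simp
    qed
  qed
  define Y where "Y = generate ?Q T"
  have Ysub: "subgroup Y ?Q" unfolding Y_def by (rule Q.generate_is_subgroup[OF TQ])
  have TY: "T \<subseteq> Y" unfolding Y_def
  proof
    fix a assume "a \<in> T" then show "a \<in> generate ?Q T" by (rule generate.incl)
  qed
  define P where "P = {y \<in> carrier G. N #> y \<in> Y}"
  have Psub: "subgroup P G" unfolding P_def by (rule preimage_q_sub[OF N Ysub])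
  define Rs where "Rs = {g \<in> carrier G. \<forall>x\<in>gm k. N #> cm g x \<in> Y}"
  have Rsub: "subgroup Rs G"
  proof (rule subgroupI)
    show "Rs \<subseteq> carrier G" unfolding Rs_def by blast
    have "\<forall>x\<in>gm k. N #> cm \<one> x \<in> Y"
    proof
      fix x assume "x \<in> gm k"
      then have xc: "x \<in> carrier G" by (rule gm_carrier')
      have "cm \<one> x = \<one>" using xc by (simp add: cm_def)
      moreover have "N #> \<one> = \<one>\<^bsub>?Q\<^esub>" using q_one_iff[OF N] subgroup.one_closed[OF gm_sub] unfolding N_def by simp
      ultimately show "N #> cm \<one> x \<in> Y" using subgroup.one_closed[OF Ysub] by simp
    qed
    then show "Rs \<noteq> {}" unfolding Rs_def by blast
    fix g assume g: "g \<in> Rs"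
    then have gc: "g \<in> carrier G" unfolding Rs_def by blast
    show "inv g \<in> Rs" unfolding Rs_def
    proof (intro CollectI conjI ballI)
      show "inv g \<in> carrier G" using gc by simp
      fix x assume x: "x \<in> gm k"
      have xc: "x \<in> carrier G" by (rule gm_carrier'[OF x])
      have y: "inv g \<otimes> x \<otimes> g \<in> gm k" by (rule normal.inv_op_closed1[OF gm_normal gc x])
      have "N #> cm g (inv g \<otimes> x \<otimes> g) \<in> Y" using g y unfolding Rs_def by blast
      then have "inv\<^bsub>?Q\<^esub> (N #> cm g (inv g \<otimes> x \<otimes> g)) \<in> Y" by (rule subgroup.m_inv_closed[OF Ysub])
      moreover have "cm (inv g) x = inv (cm g (inv g \<otimes> x \<otimes> g))"
        unfolding cm_def using cm_inv_id[OF gc xc] .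
      ultimately show "N #> cm (inv g) x \<in> Y" using qi gc xc by simp
    qed
    fix h assume h: "h \<in> Rs"
    then have hc: "h \<in> carrier G" unfolding Rs_def by blast
    show "g \<otimes> h \<in> Rs" unfolding Rs_def
    proof (intro CollectI conjI ballI)
      show "g \<otimes> h \<in> carrier G" using gc hc by simp
      fix x assume x: "x \<in> gm k"
      have xc: "x \<in> carrier G" by (rule gm_carrier'[OF x])
      have c2: "cm h x \<in> gm (Suc k)" by (rule gm_cm[OF hc x])
      have c2c: "cm h x \<in> carrier G" by (rule gm_carrier'[OF c2])
      have com: "(N #> g) \<otimes>\<^bsub>?Q\<^esub> (N #> cm h x) = (N #> cm h x) \<otimes>\<^bsub>?Q\<^esub> (N #> g)"
        using central[OF c2 gc] unfolding N_def by simp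
      have "N #> cm (g \<otimes> h) x = N #> (g \<otimes> cm h x \<otimes> x \<otimes> inv g \<otimes> inv x)"
        unfolding cm_def using cm_mult_id[OF gc hc xc] by simp
      also have "\<dots> = (N #> g) \<otimes>\<^bsub>?Q\<^esub> (N #> cm h x) \<otimes>\<^bsub>?Q\<^esub> (N #> x) \<otimes>\<^bsub>?Q\<^esub> inv\<^bsub>?Q\<^esub> (N #> g) \<otimes>\<^bsub>?Q\<^esub> inv\<^bsub>?Q\<^esub> (N #> x)"
        using gc c2c xc by (simp only: qm qi m_closed inv_closed)
      also have "\<dots> = (N #> cm h x) \<otimes>\<^bsub>?Q\<^esub> ((N #> g) \<otimes>\<^bsub>?Q\<^esub> (N #> x) \<otimes>\<^bsub>?Q\<^esub> inv\<^bsub>?Q\<^esub> (N #> g) \<otimes>\<^bsub>?Q\<^esub> inv\<^bsub>?Q\<^esub> (N #> x))"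
        by (rule Q.shift_c[OF qc[OF gc] qc[OF c2c] qc[OF xc] com])
      also have "\<dots> = (N #> cm h x) \<otimes>\<^bsub>?Q\<^esub> (N #> cm g x)"
        unfolding cm_def using gc xc by (simp only: qm qi m_closed inv_closed)
      finally have e: "N #> cm (g \<otimes> h) x = (N #> cm h x) \<otimes>\<^bsub>?Q\<^esub> (N #> cm g x)" .
      have "N #> cm h x \<in> Y" "N #> cm g x \<in> Y" using g h x unfolding Rs_def by auto
      then show "N #> cm (g \<otimes> h) x \<in> Y" using e subgroup.m_closed[OF Ysub] by simp
    qed
  qed
  have "S \<subseteq> Rs"
  proof
    fix s assume s: "s \<in> S"
    then have "\<forall>x\<in>gm k. N #> cm s x \<in> T2" unfolding T2_def by blast
    moreover have "T2 \<subseteq> Y" using TY unfolding T_def by blast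
    ultimately show "s \<in> Rs" unfolding Rs_def using s S_sub by blast
  qed
  then have "generate G S \<subseteq> Rs" by (rule generate_subgroup_incl[OF _ Rsub])
  then have RsG: "carrier G \<subseteq> Rs" using S_gen by simp
  have "gm (Suc k) \<subseteq> P"
  proof (rule gm_least[OF Psub])
    fix x assume x: "x \<in> gm k"
    have "N #> (x [^] p) \<in> T1" unfolding T1_def using x by blast
    moreover have "T1 \<subseteq> Y" using TY unfolding T_def by blast
    ultimately show "x [^] p \<in> P" unfolding P_def using gm_carrier'[OF x] by blast
  next
    fix g x assume g: "g \<in> carrier G" and x: "x \<in> gm k"
    have "N #> cm g x \<in> Y" using RsG g x unfolding Rs_def by blast
    then show "cm g x \<in> P" unfolding P_def using g gm_carrier'[OF x] by simp
  qed
  then have "Lset (Suc k) \<subseteq> Y" unfolding Lset_def P_def N_def by blast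
  then show ?case using finY finite_subset unfolding Y_def by blast
qed

lemma fin_Q: "finite {gm k #> x | x. x \<in> carrier G}"
proof (induction k)
  case 0
  have "{gm 0 #> x | x. x \<in> carrier G} \<subseteq> {carrier G}"
    using coset_join2[OF _ subgroup_self] by auto
  then show ?case using finite_subset by blast
next
  case (Suc k)
  define f where "f = (\<lambda>(C, D). C #> (SOME r. r \<in> D))"
  have "{gm (Suc k) #> x | x. x \<in> carrier G} \<subseteq> f ` (Lset k \<times> {gm k #> x | x. x \<in> carrier G})"
  proof
    fix a assume "a \<in> {gm (Suc k) #> x | x. x \<in> carrier G}"
    then obtain x where x: "x \<in> carrier G" "a = gm (Suc k) #> x" by blast
    have "x \<in> gm k #> x" using rcos_self[OF x(1) gm_sub] .
    then have r: "(SOME r. r \<in> gm k #> x) \<in> gm k #> x" by (rule someI)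
    then obtain h where h: "h \<in> gm k" "(SOME r. r \<in> gm k #> x) = h \<otimes> x" by (auto simp: r_coset_def)
    have hc: "h \<in> carrier G" by (rule gm_carrier'[OF h(1)])
    have ih: "inv h \<in> gm k" by (rule subgroup.m_inv_closed[OF gm_sub h(1)])
    have "f (gm (Suc k) #> inv h, gm k #> x) = (gm (Suc k) #> inv h) #> (h \<otimes> x)" unfolding f_def using h(2) by simp
    also have "\<dots> = gm (Suc k) #> (inv h \<otimes> (h \<otimes> x))" using coset_mult_assoc[OF gm_carrier] hc x(1) by simp
    also have "\<dots> = a" using x hc by (simp add: m_assoc[symmetric])
    finally have "a = f (gm (Suc k) #> inv h, gm k #> x)" by simp
    moreover have "(gm (Suc k) #> inv h, gm k #> x) \<in> Lset k \<times> {gm k #> x | x. x \<in> carrier G}"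
      unfolding Lset_def using ih x(1) by blast
    ultimately show "a \<in> f ` (Lset k \<times> {gm k #> x | x. x \<in> carrier G})" by blast
  qed
  moreover have "finite (f ` (Lset k \<times> {gm k #> x | x. x \<in> carrier G}))" using fin_L Suc.IH by simp
  ultimately show ?case using finite_subset by blast
qed

end

declare lpc_aux.simps(2)[simp del] mult_FactGroup[simp del] one_FactGroup[simp del]

lemma finite_Bij: "finite S \<Longrightarrow> finite (Bij S)"
proof -
  assume f: "finite S"
  have "Bij S \<subseteq> PiE S (\<lambda>_. S)"
    by (auto simp: Bij_def PiE_def bij_betw_def extensional_def)
  moreover have "finite (PiE S (\<lambda>_. S))" using f by (simp add: finite_PiE)
  ultimately show ?thesis using finite_subset by blast
qed

context group
begin

lemma autopow:
  assumes a: "a \<in> auto G"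
  shows "\<forall>x\<in>carrier G. (a [^]\<^bsub>AutoGroup G\<^esub> (m::nat)) x = (a ^^ m) x"
proof (induction m)
  case 0 then show ?case by (simp add: AutoGroup_def BijGroup_def)
next
  case (Suc m)
  interpret AG: group "AutoGroup G" by (rule AutoGroup)
  have ac: "a \<in> carrier (AutoGroup G)" using a by (simp add: AutoGroup_def)
  have pc: "a [^]\<^bsub>AutoGroup G\<^esub> m \<in> carrier (AutoGroup G)" using ac by simp
  have pB: "a [^]\<^bsub>AutoGroup G\<^esub> m \<in> Bij (carrier G)" and aB: "a \<in> Bij (carrier G)"
    using pc ac by (auto simp: AutoGroup_def auto_def)
  have e1: "a [^]\<^bsub>AutoGroup G\<^esub> Suc m = a [^]\<^bsub>AutoGroup G\<^esub> m \<otimes>\<^bsub>AutoGroup G\<^esub> a"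
    by (rule AG.nat_pow_Suc)
  have e2: "\<And>f g. f \<otimes>\<^bsub>AutoGroup G\<^esub> g = f \<otimes>\<^bsub>BijGroup (carrier G)\<^esub> g" by (simp add: AutoGroup_def)
  have e3: "a [^]\<^bsub>AutoGroup G\<^esub> m \<otimes>\<^bsub>BijGroup (carrier G)\<^esub> a = compose (carrier G) (a [^]\<^bsub>AutoGroup G\<^esub> m) a"
    using pB aB by (simp only: BijGroup_def monoid.simps restrict_apply if_True)
  have "a [^]\<^bsub>AutoGroup G\<^esub> Suc m = compose (carrier G) (a [^]\<^bsub>AutoGroup G\<^esub> m) a"
    using e1 e2 e3 by simp
  moreover have "\<forall>x\<in>carrier G. a x \<in> carrier G" using a hom_in_carrier by (auto simp: auto_def)
  ultimately show ?case using Suc.IH by (simp add: compose_def funpow_swap1)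
qed

end

context indsetup
begin

lemma GF:
  assumes p: "Factorial_Ring.prime p" and A: "subgroup A (AutoGroup G)" and fR: "finite R"
    and ex: "\<And>a. a \<in> A \<Longrightarrow> ind G H N a [^]\<^bsub>BijGroup R\<^esub> (p ^ e) = \<one>\<^bsub>BijGroup R\<^esub>"
  shows "finite_p_group p (ind G H N ` A)"
proof -
  have gh: "group_hom (AutoGroup G) (BijGroup R) (ind G H N)"
    using ind_hom AutoGroup group_BijGroup by (simp add: group_hom_def group_hom_axioms_def)
  have T: "subgroup (ind G H N ` A) (BijGroup R)" by (rule group_hom.subgroup_img_is_subgroup[OF gh A])
  interpret K: group "BijGroup R\<lparr>carrier := ind G H N ` A\<rparr>"
    by (rule group.subgroup_imp_group[OF group_BijGroup T])
  have fT: "finite (ind G H N ` A)"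
    using finite_subset[OF _ finite_Bij[OF fR]] subgroup.subset[OF T] by (simp add: BijGroup_def)
  have "\<exists>j. card (carrier (BijGroup R\<lparr>carrier := ind G H N ` A\<rparr>)) = p ^ j"
  proof (rule K.p_group_of_exp[OF p])
    show "finite (carrier (BijGroup R\<lparr>carrier := ind G H N ` A\<rparr>))" using fT by simp
    fix x assume "x \<in> carrier (BijGroup R\<lparr>carrier := ind G H N ` A\<rparr>)"
    then obtain a where a: "a \<in> A" "x = ind G H N a" by auto
    have "x [^]\<^bsub>BijGroup R\<lparr>carrier := ind G H N ` A\<rparr>\<^esub> (p ^ e) = x [^]\<^bsub>BijGroup R\<^esub> (p ^ e)"
      by (rule monoid.nat_pow_consistent[OF group.is_monoid[OF group_BijGroup], symmetric])
    also have "\<dots> = \<one>\<^bsub>BijGroup R\<^esub>" using ex[OF a(1)] a(2) by simp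
    finally show "x [^]\<^bsub>BijGroup R\<lparr>carrier := ind G H N ` A\<rparr>\<^esub> (p ^ e) = \<one>\<^bsub>BijGroup R\<lparr>carrier := ind G H N ` A\<rparr>\<^esub>"
      by simp
  qed
  then show ?thesis using fT by (simp add: finite_p_group_def)
qed

lemma ind_pow:
  assumes A: "subgroup A (AutoGroup G)" and a: "a \<in> A"
  shows "ind G H N a [^]\<^bsub>BijGroup R\<^esub> (m::nat) = ind G H N (a [^]\<^bsub>AutoGroup G\<^esub> m)"
proof -
  have gh: "group_hom (AutoGroup G) (BijGroup R) (ind G H N)"
    using ind_hom AutoGroup group_BijGroup by (simp add: group_hom_def group_hom_axioms_def)
  have "a \<in> carrier (AutoGroup G)" using A a subgroup.subset by blast
  then show ?thesis using group_hom.hom_nat_pow[OF gh] by simp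
qed

lemma ind_pow_one:
  assumes A: "subgroup A (AutoGroup G)" and a: "a \<in> A"
    and t: "\<forall>x\<in>H. (a ^^ m) x \<otimes> inv x \<in> N"
  shows "ind G H N a [^]\<^bsub>BijGroup R\<^esub> (m::nat) = \<one>\<^bsub>BijGroup R\<^esub>"
proof -
  interpret AG: group "AutoGroup G" by (rule AutoGroup)
  have ac: "a \<in> carrier (AutoGroup G)" using A a subgroup.subset by blast
  have aa: "a \<in> auto G" using ac by (simp add: AutoGroup_def)
  have "a [^]\<^bsub>AutoGroup G\<^esub> m \<in> carrier (AutoGroup G)" using ac by simp
  then have pa: "a [^]\<^bsub>AutoGroup G\<^esub> m \<in> auto G" by (simp add: AutoGroup_def)
  have "\<forall>x\<in>H. (a [^]\<^bsub>AutoGroup G\<^esub> m) x \<otimes> inv x \<in> N" using t autopow[OF aa] Hc by auto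
  then have "ind G H N (a [^]\<^bsub>AutoGroup G\<^esub> m) = \<one>\<^bsub>BijGroup R\<^esub>" using ind_one_iff[OF pa] by simp
  then show ?thesis using ind_pow[OF A a] by simp
qed

lemma ind_pow_one_rev:
  assumes A: "subgroup A (AutoGroup G)" and a: "a \<in> A"
    and o: "ind G H N a [^]\<^bsub>BijGroup R\<^esub> (m::nat) = \<one>\<^bsub>BijGroup R\<^esub>"
  shows "\<forall>x\<in>H. (a ^^ m) x \<otimes> inv x \<in> N"
proof -
  interpret AG: group "AutoGroup G" by (rule AutoGroup)
  have ac: "a \<in> carrier (AutoGroup G)" using A a subgroup.subset by blast
  have aa: "a \<in> auto G" using ac by (simp add: AutoGroup_def)
  have "a [^]\<^bsub>AutoGroup G\<^esub> m \<in> carrier (AutoGroup G)" using ac by simp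
  then have pa: "a [^]\<^bsub>AutoGroup G\<^esub> m \<in> auto G" by (simp add: AutoGroup_def)
  have "ind G H N (a [^]\<^bsub>AutoGroup G\<^esub> m) = \<one>\<^bsub>BijGroup R\<^esub>" using o ind_pow[OF A a] by simp
  then have h: "\<forall>x\<in>H. (a [^]\<^bsub>AutoGroup G\<^esub> m) x \<otimes> inv x \<in> N" using ind_one_iff[OF pa] by simp
  show ?thesis
  proof
    fix x assume x: "x \<in> H"
    then have "(a [^]\<^bsub>AutoGroup G\<^esub> m) x = (a ^^ m) x" using autopow[OF aa] Hc by blast
    then show "(a ^^ m) x \<otimes> inv x \<in> N" using h x by metis
  qed
qed

lemma ind_exp_of_card:
  assumes A: "subgroup A (AutoGroup G)" and a: "a \<in> A"
    and f: "finite (ind G H N ` A)" and c: "card (ind G H N ` A) = K"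
  shows "ind G H N a [^]\<^bsub>BijGroup R\<^esub> K = \<one>\<^bsub>BijGroup R\<^esub>"
proof -
  have gh: "group_hom (AutoGroup G) (BijGroup R) (ind G H N)"
    using ind_hom AutoGroup group_BijGroup by (simp add: group_hom_def group_hom_axioms_def)
  have T: "subgroup (ind G H N ` A) (BijGroup R)" by (rule group_hom.subgroup_img_is_subgroup[OF gh A])
  interpret K: group "BijGroup R\<lparr>carrier := ind G H N ` A\<rparr>"
    by (rule group.subgroup_imp_group[OF group_BijGroup T])
  have "ind G H N a \<in> carrier (BijGroup R\<lparr>carrier := ind G H N ` A\<rparr>)" using a by simp
  then have "ind G H N a [^]\<^bsub>BijGroup R\<lparr>carrier := ind G H N ` A\<rparr>\<^esub> order (BijGroup R\<lparr>carrier := ind G H N ` A\<rparr>)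
     = \<one>\<^bsub>BijGroup R\<lparr>carrier := ind G H N ` A\<rparr>\<^esub>" by (rule K.pow_order_eq_1)
  moreover have "ind G H N a [^]\<^bsub>BijGroup R\<lparr>carrier := ind G H N ` A\<rparr>\<^esub> K = ind G H N a [^]\<^bsub>BijGroup R\<^esub> K"
    by (rule monoid.nat_pow_consistent[OF group.is_monoid[OF group_BijGroup], symmetric])
  ultimately show ?thesis using c by (simp add: order_def)
qed

end

declare lpc_aux.simps(2)[simp del] mult_FactGroup[simp del] one_FactGroup[simp del]

lemma theta_eq: "theta G p (Suc k) = ind G (lpc_aux G p k) (lpc_aux G p (Suc k))"
  by (simp add: theta_def Lquot_def ind_def gamma_def fun_eq_iff)

lemma sigma_eq: "sigma G p (Suc k) = ind G (carrier G) (lpc_aux G p k)"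
  by (simp add: sigma_def ind_def gamma_def fun_eq_iff)

context lpc
begin

lemma gm_inv: "\<phi> \<in> hom G G \<Longrightarrow> \<phi> ` gm k \<subseteq> gm k" using gm_props by blast

lemma ind_L: "indsetup G (gm k) (gm (Suc k))"
  unfolding indsetup_def indsetup_axioms_def
  using is_group gm_sub gm_normal gm_mono_Suc gm_inv by blast

lemma ind_Q: "indsetup G (carrier G) (gm k)"
proof -
  have "\<And>\<phi>. \<phi> \<in> hom G G \<Longrightarrow> \<phi> ` carrier G \<subseteq> carrier G" by (auto intro: hom_in_carrier)
  then show ?thesis unfolding indsetup_def indsetup_axioms_def
    using is_group subgroup_self gm_normal gm_carrier gm_inv by blast
qed

end

context lpcfg
begin

lemma R_L_fin: "finite (carrier (G\<lparr>carrier := gm k\<rparr> Mod gm (Suc k)))"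
  using fin_L[of k] R_eq[where G=G and H="gm k" and N="gm (Suc k)"] by (simp add: Lset_def)

lemma R_Q_fin: "finite (carrier (G\<lparr>carrier := carrier G\<rparr> Mod gm k))"
  using fin_Q[of k] R_eq[where G=G and H="carrier G" and N="gm k"] by simp

lemma forward:
  assumes p: "Factorial_Ring.prime p" and A: "subgroup A (AutoGroup G)"
    and f1: "finite_p_group p (theta G p 1 ` A)"
  shows "(\<forall>n\<ge>1. finite_p_group p (theta G p n ` A)) \<and> (\<forall>n\<ge>1. finite_p_group p (sigma G p n ` A))"
proof -
  obtain K where fK: "finite (theta G p 1 ` A)" "card (theta G p 1 ` A) = p ^ K"
    using f1 by (auto simp: finite_p_group_def)
  have th1: "theta G p 1 = ind G (gm 0) (gm (Suc 0))" using theta_eq[of G p 0] by simp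
  interpret I0: indsetup G "gm 0" "gm (Suc 0)" by (rule ind_L)
  have key: "\<forall>g\<in>carrier G. (a ^^ (p ^ K)) g \<otimes> inv g \<in> gm (Suc 0)" and ah: "a \<in> hom G G" if a: "a \<in> A" for a
  proof -
    have "ind G (gm 0) (gm (Suc 0)) a [^]\<^bsub>BijGroup I0.R\<^esub> (p ^ K) = \<one>\<^bsub>BijGroup I0.R\<^esub>"
      by (rule I0.ind_exp_of_card[OF A a]) (use fK th1 in simp_all)
    then show "\<forall>g\<in>carrier G. (a ^^ (p ^ K)) g \<otimes> inv g \<in> gm (Suc 0)"
      using I0.ind_pow_one_rev[OF A a] by simp
    have "a \<in> carrier (AutoGroup G)" using A a subgroup.subset by blast
    then show "a \<in> hom G G" by (simp add: AutoGroup_def auto_def)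
  qed
  have part1: "finite_p_group p (theta G p n ` A)" if n: "n \<ge> 1" for n
  proof -
    obtain k where k: "n = Suc k" using n by (cases n) auto
    interpret Ik: indsetup G "gm k" "gm (Suc k)" by (rule ind_L)
    have "finite_p_group p (ind G (gm k) (gm (Suc k)) ` A)"
    proof (rule Ik.GF[OF p A R_L_fin])
      fix a assume a: "a \<in> A"
      have c: "a ^^ (p ^ K) \<in> hom G G" by (rule funpow_hom[OF ah[OF a]])
      have "\<forall>x\<in>gm k. (a ^^ (p ^ K)) x \<otimes> inv x \<in> gm (Suc k)" by (rule triv_L[OF c key[OF a]])
      then show "ind G (gm k) (gm (Suc k)) a [^]\<^bsub>BijGroup Ik.R\<^esub> (p ^ K) = \<one>\<^bsub>BijGroup Ik.R\<^esub>"
        by (rule Ik.ind_pow_one[OF A a])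
    qed
    then show ?thesis using theta_eq[of G p k] k by simp
  qed
  have part2: "finite_p_group p (sigma G p n ` A)" if n: "n \<ge> 1" for n
  proof -
    obtain k where k: "n = Suc k" using n by (cases n) auto
    interpret Ik: indsetup G "carrier G" "gm k" by (rule ind_Q)
    have "finite_p_group p (ind G (carrier G) (gm k) ` A)"
    proof (rule Ik.GF[OF p A R_Q_fin])
      fix a assume a: "a \<in> A"
      have c: "a ^^ (p ^ K) \<in> hom G G" by (rule funpow_hom[OF ah[OF a]])
      have "\<forall>g\<in>carrier G. ((a ^^ (p ^ K)) ^^ (p ^ k)) g \<otimes> inv g \<in> gm (Suc k)" by (rule CH[OF c key[OF a]])
      moreover have "gm (Suc k) \<subseteq> gm k" by (rule gm_mono_Suc)
      moreover have "(a ^^ (p ^ K)) ^^ (p ^ k) = a ^^ (p ^ (K + k))" by (simp add: funpow_mult power_add)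
      ultimately have "\<forall>g\<in>carrier G. (a ^^ (p ^ (K + k))) g \<otimes> inv g \<in> gm k" by auto
      then show "ind G (carrier G) (gm k) a [^]\<^bsub>BijGroup Ik.R\<^esub> (p ^ (K + k)) = \<one>\<^bsub>BijGroup Ik.R\<^esub>"
        by (rule Ik.ind_pow_one[OF A a])
    qed
    then show ?thesis using sigma_eq[of G p k] k by simp
  qed
  show ?thesis using part1 part2 by blast
qed

end

theorem corollary3p5:
  fixes G :: "('a, 'b) monoid_scheme" and p :: nat and A :: "('a \<Rightarrow> 'a) set"
  assumes "Factorial_Ring.prime p" and "group G" and "fin_gen G"
    and "subgroup A (AutoGroup G)"
  shows "(finite_p_group p (theta G p 1 ` A) \<longleftrightarrow>
            (\<forall>n\<ge>1. finite_p_group p (theta G p n ` A)))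
       \<and> (finite_p_group p (theta G p 1 ` A) \<longleftrightarrow>
            (\<forall>n\<ge>1. finite_p_group p (sigma G p n ` A)))"
proof -
  obtain S where S: "finite S" "S \<subseteq> carrier G" "generate G S = carrier G"
    using assms(3) by (auto simp: fin_gen_def)
  have pp: "p > 0" using assms(1) prime_gt_0_nat by blast
  interpret F: lpcfg G p S
    unfolding lpcfg_def lpcfg_axioms_def lpc_def using assms(2) S pp by blast
  have eq12: "theta G p 1 = sigma G p 2"
    using theta_eq[of G p 0] sigma_eq[of G p 1] by (simp add: numeral_2_eq_2)
  show ?thesis
  proof (intro conjI iffI)
    assume "finite_p_group p (theta G p 1 ` A)"
    then show "\<forall>n\<ge>1. finite_p_group p (theta G p n ` A)" using F.forward[OF assms(1) assms(4)] by blast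
  next
    assume "\<forall>n\<ge>1. finite_p_group p (theta G p n ` A)"
    then show "finite_p_group p (theta G p 1 ` A)" by simp
  next
    assume "finite_p_group p (theta G p 1 ` A)"
    then show "\<forall>n\<ge>1. finite_p_group p (sigma G p n ` A)" using F.forward[OF assms(1) assms(4)] by blast
  next
    assume "\<forall>n\<ge>1. finite_p_group p (sigma G p n ` A)"
    then show "finite_p_group p (theta G p 1 ` A)" using eq12 by simp
  qed
qed


end
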